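(* Let $\mathcal{P}$ be a grid polyomino, $I_{\mathcal{P}}$ its polyomino ideal and $J_{\mathcal{P}}$ its toric ideal. Then $I_{\mathcal{P}}=J_{\mathcal{P}}$.
   Context: A cell is $[a,a+(1,1)]$, $a\in\mathbb{N}^2$, with vertices $a,a+(1,0),a+(0,1),a+(1,1)$; a polyomino is a finite nonempty set of cells, any two joined by a sequence of cells in it with consecutive ones sharing an edge; $V(\mathcal{P})$ is the set of vertices of its cells; $S=\mathbb{K}[x_v\mid v\in V(\mathcal{P})]$, $\mathbb{K}$ a field. For $a\le b$ componentwise, $[a,b]=\{(p,q): a_1\le p\le b_1, a_2\le q\le b_2\}$; if $a_1<b_1$, $a_2<b_2$ it has diagonal corners $a,b$ and anti-diagonal corners $c=(a_1,b_2)$, $d=(b_1,a_2)$, and is an inner interval of $\mathcal{P}$ if all its cells lie in $\mathcal{P}$. $I_{\mathcal{P}}$ is generated by all $x_ax_b-x_cx_d$ for inner intervals $[a,b]$. Grid polyomino: let $m,n\ge1$, $r,s\ge1$, and for $i\in[r]$, $j\in[s]$ let $a_{ij},b_{ij}\in\mathbb{N}^2$ with $1<(a_{ij})_1<(b_{ij})_1<m$, $1<(a_{ij})_2<(b_{ij})_2<n$, such that (1) for each $i$, $(a_{i\ell})_1=(a_{ik})_1$ and $(b_{i\ell})_1=(b_{ik})_1$ for all $\ell,k\in[s]$; (2) for each $j$, $(a_{\ell j})_2=(a_{kj})_2$ and $(b_{\ell j})_2=(b_{kj})_2$ for all $\ell,k\in[r]$; (3) $(a_{i+1,j})_1=(b_{ij})_1+1$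 for $i\in[r-1]$ and $(a_{i,j+1})_2=(b_{ij})_2+1$ for $j\in[s-1]$. The grid polyomino $\mathcal{P}$ is the set of cells of $[(1,1),(m,n)]$ not contained in any $[a_{ij},b_{ij}]$; its holes are the sets of cells of the $[a_{ij},b_{ij}]$, with lower left corners $a_{ij}$. Toric ideal: $\mathcal{F}_{i,j}=\{(x,y)\in V(\mathcal{P}): x\le(a_{ij})_1,\ y\le(a_{ij})_2\}$. A horizontal edge interval is a set $\{(t,y):p\le t\le q\}$ with each $\{(t,y),(t+1,y)\}$, $p\le t<q$, an edge of a cell of $\mathcal{P}$; maximal if not strictly contained in another; vertical analogously. Each $a\in V(\mathcal{P})$ lies in a unique maximal horizontal edge interval $H(a)$ and maximal vertical one $V(a)$. With variables $h_H,v_V$ for maximal edge intervals and $w_{i,j}$, define $\varphi:S\to\mathbb{K}[h_H,v_V,w_{i,j}]$, $\varphi(x_a)=h_{H(a)}v_{V(a)}\prod_{(i,j):a\in\mathcal{F}_{i,j}}w_{i,j}$; $J_{\mathcal{P}}=\ker\varphi$. *)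

theory Defs
  imports Main "HOL-Library.Poly_Mapping"
begin

(* Points and cells are elements of nat x nat; a cell is identified with its lower-left corner. *)

type_synonym pt = "nat \<times> nat"

type_synonym ('v, 'k) mpoly = "('v \<Rightarrow>\<^sub>0 nat) \<Rightarrow>\<^sub>0 'k"

definition Var :: "'v \<Rightarrow> ('v, 'k::comm_ring_1) mpoly" where
  "Var v = Poly_Mapping.single (Poly_Mapping.single v 1) 1"

definition poly_ring :: "'v set \<Rightarrow> ('v, 'k::comm_ring_1) mpoly set" where
  "poly_ring X = {p::(_,_) mpoly. \<forall>m \<in> Poly_Mapping.keys p. Poly_Mapping.keys m \<subseteq> X}"

definition ideal_gen :: "('v, 'k::comm_ring_1) mpoly set \<Rightarrow> ('v, 'k) mpoly set \<Rightarrow> ('v, 'k) mpoly set" where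
  "ideal_gen R G = {p. \<exists>F c. finite F \<and> F \<subseteq> G \<and> (\<forall>g\<in>F. c g \<in> R) \<and> p = (\<Sum>g\<in>F. c g * g)}"

definition subst_hom :: "('v \<Rightarrow> ('w, 'k::comm_ring_1) mpoly) \<Rightarrow> ('v, 'k) mpoly \<Rightarrow> ('w, 'k) mpoly" where
  "subst_hom f p = (\<Sum>m\<in>Poly_Mapping.keys p. Poly_Mapping.single 0 (Poly_Mapping.lookup p m) * (\<Prod>v\<in>Poly_Mapping.keys m. f v ^ Poly_Mapping.lookup m v))"

definition cell_in :: "pt \<Rightarrow> pt \<Rightarrow> pt \<Rightarrow> bool" where
  "cell_in c a b \<longleftrightarrow> fst a \<le> fst c \<and> fst c + 1 \<le> fst b \<and> snd a \<le> snd c \<and> snd c + 1 \<le> snd b"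

definition vertices :: "pt set \<Rightarrow> pt set" where
  "vertices P = {(fst c + dx, snd c + dy) | c dx dy. c \<in> P \<and> dx \<le> 1 \<and> dy \<le> 1}"

definition inner_interval :: "pt set \<Rightarrow> pt \<Rightarrow> pt \<Rightarrow> bool" where
  "inner_interval P a b \<longleftrightarrow> fst a < fst b \<and> snd a < snd b \<and> (\<forall>c. cell_in c a b \<longrightarrow> c \<in> P)"

definition polyomino_ideal :: "pt set \<Rightarrow> (pt, 'k::comm_ring_1) mpoly set" where
  "polyomino_ideal P = ideal_gen (poly_ring (vertices P))
     {Var a * Var b - Var (fst a, snd b) * Var (fst b, snd a) | a b. inner_interval P a b}"

definition grid_data :: "nat \<Rightarrow> nat \<Rightarrow> nat \<Rightarrow> nat \<Rightarrow> (nat \<Rightarrow> nat \<Rightarrow> pt) \<Rightarrow> (nat \<Rightarrow> nat \<Rightarrow> pt) \<Rightarrow> bool" where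
  "grid_data m n r s a b \<longleftrightarrow> m \<ge> 1 \<and> n \<ge> 1 \<and> r \<ge> 1 \<and> s \<ge> 1 \<and>
     (\<forall>i\<in>{1..r}. \<forall>j\<in>{1..s}.
        1 < fst (a i j) \<and> fst (a i j) < fst (b i j) \<and> fst (b i j) < m \<and>
        1 < snd (a i j) \<and> snd (a i j) < snd (b i j) \<and> snd (b i j) < n) \<and>
     (\<forall>i\<in>{1..r}. \<forall>l\<in>{1..s}. \<forall>k\<in>{1..s}. fst (a i l) = fst (a i k) \<and> fst (b i l) = fst (b i k)) \<and>
     (\<forall>j\<in>{1..s}. \<forall>l\<in>{1..r}. \<forall>k\<in>{1..r}. snd (a l j) = snd (a k j) \<and> snd (b l j) = snd (b k j)) \<and>
     (\<forall>i\<in>{1..r-1}. \<forall>j\<in>{1..s}. fst (a (i+1) j) = fst (b i j) + 1) \<and>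
     (\<forall>i\<in>{1..r}. \<forall>j\<in>{1..s-1}. snd (a i (j+1)) = snd (b i j) + 1)"

definition grid_polyomino :: "nat \<Rightarrow> nat \<Rightarrow> nat \<Rightarrow> nat \<Rightarrow> (nat \<Rightarrow> nat \<Rightarrow> pt) \<Rightarrow> (nat \<Rightarrow> nat \<Rightarrow> pt) \<Rightarrow> pt set" where
  "grid_polyomino m n r s a b =
     {c. cell_in c (1,1) (m,n) \<and> \<not> (\<exists>i\<in>{1..r}. \<exists>j\<in>{1..s}. cell_in c (a i j) (b i j))}"

definition h_edge :: "pt set \<Rightarrow> pt \<Rightarrow> bool" where  (* {(t,y),(t+1,y)} is an edge of a cell of P *)
  "h_edge P p \<longleftrightarrow> p \<in> P \<or> (snd p > 0 \<and> (fst p, snd p - 1) \<in> P)"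

definition v_edge :: "pt set \<Rightarrow> pt \<Rightarrow> bool" where  (* {(x,t),(x,t+1)} is an edge of a cell of P *)
  "v_edge P p \<longleftrightarrow> p \<in> P \<or> (fst p > 0 \<and> (fst p - 1, snd p) \<in> P)"

definition h_edge_interval :: "pt set \<Rightarrow> pt set \<Rightarrow> bool" where
  "h_edge_interval P I \<longleftrightarrow> (\<exists>p q y. p < q \<and> I = {(t, y) | t. p \<le> t \<and> t \<le> q} \<and>
      (\<forall>t. p \<le> t \<and> t < q \<longrightarrow> h_edge P (t, y)))"

definition v_edge_interval :: "pt set \<Rightarrow> pt set \<Rightarrow> bool" where
  "v_edge_interval P I \<longleftrightarrow> (\<exists>p q x. p < q \<and> I = {(x, t) | t. p \<le> t \<and> t \<le> q} \<and>
      (\<forall>t. p \<le> t \<and> t < q \<longrightarrow> v_edge P (x, t)))"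

definition max_h_interval :: "pt set \<Rightarrow> pt set \<Rightarrow> bool" where
  "max_h_interval P I \<longleftrightarrow> h_edge_interval P I \<and> \<not> (\<exists>J. h_edge_interval P J \<and> I \<subset> J)"

definition max_v_interval :: "pt set \<Rightarrow> pt set \<Rightarrow> bool" where
  "max_v_interval P I \<longleftrightarrow> v_edge_interval P I \<and> \<not> (\<exists>J. v_edge_interval P J \<and> I \<subset> J)"

definition Hint :: "pt set \<Rightarrow> pt \<Rightarrow> pt set" where
  "Hint P v = (THE I. max_h_interval P I \<and> v \<in> I)"

definition Vint :: "pt set \<Rightarrow> pt \<Rightarrow> pt set" where
  "Vint P v = (THE I. max_v_interval P I \<and> v \<in> I)"

(* variables of the target ring: h_H, v_V, w_{i,j} *)
datatype tvar = Th "pt set" | Tv "pt set" | Tw nat nat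

definition Fset :: "pt set \<Rightarrow> (nat \<Rightarrow> nat \<Rightarrow> pt) \<Rightarrow> nat \<Rightarrow> nat \<Rightarrow> pt set" where
  "Fset P a i j = {v \<in> vertices P. fst v \<le> fst (a i j) \<and> snd v \<le> snd (a i j)}"

definition phi_var :: "pt set \<Rightarrow> nat \<Rightarrow> nat \<Rightarrow> (nat \<Rightarrow> nat \<Rightarrow> pt) \<Rightarrow> pt \<Rightarrow> (tvar, 'k::comm_ring_1) mpoly" where
  "phi_var P r s a v = Var (Th (Hint P v)) * Var (Tv (Vint P v)) *
     (\<Prod>(i,j)\<in>{(i,j). i \<in> {1..r} \<and> j \<in> {1..s} \<and> v \<in> Fset P a i j}. Var (Tw i j))"

definition toric_ideal :: "pt set \<Rightarrow> nat \<Rightarrow> nat \<Rightarrow> (nat \<Rightarrow> nat \<Rightarrow> pt) \<Rightarrow> (pt, 'k::comm_ring_1) mpoly set" where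
  "toric_ideal P r s a = {p \<in> poly_ring (vertices P). subst_hom (phi_var P r s a) p = 0}"

end

theory Submission
  imports Defs "HOL-Library.Multiset"
begin


definition expo :: "'a multiset \<Rightarrow> ('a \<Rightarrow>\<^sub>0 nat)" where
  "expo M = Abs_poly_mapping (count M)"

definition msetof :: "('a \<Rightarrow>\<^sub>0 nat) \<Rightarrow> 'a multiset" where
  "msetof m = Abs_multiset (Poly_Mapping.lookup m)"

definition mv :: "('v \<Rightarrow> ('w, 'k::comm_ring_1) mpoly) \<Rightarrow> ('v \<Rightarrow>\<^sub>0 nat) \<Rightarrow> ('w, 'k) mpoly" where
  "mv f m = (\<Prod>v\<in>Poly_Mapping.keys m. f v ^ Poly_Mapping.lookup m v)"

lemma lookup_expo [simp]: "Poly_Mapping.lookup (expo M) = count M"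
proof -
  have "finite {x. count M x \<noteq> 0}" by (simp add: count_eq_zero_iff)
  then show ?thesis unfolding expo_def by simp
qed

lemma count_msetof [simp]: "count (msetof m) = Poly_Mapping.lookup m"
  unfolding msetof_def by (rule count_Abs_multiset) simp

lemma expo_msetof [simp]: "expo (msetof m) = m"
  by (rule poly_mapping_eqI) simp

lemma keys_expo [simp]: "Poly_Mapping.keys (expo M) = set_mset M"
  by (auto simp: in_keys_iff)

lemma set_msetof [simp]: "set_mset (msetof m) = Poly_Mapping.keys m"
  by (metis expo_msetof keys_expo)

lemma expo_add: "expo (M + N) = expo M + expo N"
  by (rule poly_mapping_eqI) (simp add: lookup_add)

lemma expo_empty [simp]: "expo {#} = 0"
  by (rule poly_mapping_eqI) simp

lemma expo_single: "expo {#v#} = Poly_Mapping.single v 1"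
  by (rule poly_mapping_eqI) (simp add: lookup_single when_def)

lemma expo_add_mset: "expo (add_mset v M) = Poly_Mapping.single v 1 + expo M"
  by (metis add_mset_add_single expo_add expo_single add.commute)

lemma prod_count_mset:
  assumes "finite S" "set_mset M \<subseteq> S"
  shows "(\<Prod>v\<in>S. f v ^ count M v) = prod_mset (image_mset f M)"
  using assms(2)
proof (induction M)
  case empty
  then show ?case by simp
next
  case (add x M)
  have xS: "x \<in> S" using add.prems by auto
  have "(\<Prod>v\<in>S. f v ^ count (add_mset x M) v) = (\<Prod>v\<in>S. f v ^ count M v * (if v = x then f v else 1))"
    by (rule prod.cong) (auto simp: mult.commute)
  also have "\<dots> = (\<Prod>v\<in>S. f v ^ count M v) * (\<Prod>v\<in>S. (if v = x then f v else 1))"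
    by (rule prod.distrib)
  also have "(\<Prod>v\<in>S. (if v = x then f v else 1)) = f x"
    using xS assms(1) by (simp add: prod.delta)
  finally show ?case using add by (simp add: mult.commute)
qed

lemma mv_expo: "mv f (expo M) = prod_mset (image_mset f M)"
  unfolding mv_def by (simp add: prod_count_mset)

lemma mv_add: "mv f (m + m') = mv f m * mv f m'"
proof -
  have "m + m' = expo (msetof m + msetof m')" by (simp add: expo_add)
  then have "mv f (m + m') = prod_mset (image_mset f (msetof m + msetof m'))"
    by (simp add: mv_expo)
  also have "\<dots> = prod_mset (image_mset f (msetof m)) * prod_mset (image_mset f (msetof m'))"
    by simp
  also have "\<dots> = mv f m * mv f m'"
    by (simp only: mv_expo[symmetric] expo_msetof)
  finally show ?thesis .
qed

lemma subst_hom_superset: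
  assumes "finite S" "Poly_Mapping.keys p \<subseteq> S"
  shows "subst_hom f p = (\<Sum>m\<in>S. Poly_Mapping.single 0 (Poly_Mapping.lookup p m) * mv f m)"
  unfolding subst_hom_def mv_def
  by (rule sum.mono_neutral_left) (use assms in \<open>auto simp: in_keys_iff\<close>)

lemma subst_hom_add: "subst_hom f (p + q) = subst_hom f p + subst_hom f q"
proof -
  let ?S = "Poly_Mapping.keys p \<union> Poly_Mapping.keys q"
  have k: "Poly_Mapping.keys (p + q) \<subseteq> ?S" by (rule keys_add)
  show ?thesis
    by (simp add: subst_hom_superset[OF _ k] subst_hom_superset[of ?S p] subst_hom_superset[of ?S q]
        lookup_add single_add distrib_right sum.distrib)
qed

lemma subst_hom_diff: "subst_hom f (p - q) = subst_hom f p - subst_hom f q"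
proof -
  let ?S = "Poly_Mapping.keys p \<union> Poly_Mapping.keys q"
  have k: "Poly_Mapping.keys (p - q) \<subseteq> ?S" by (rule keys_diff)
  show ?thesis
    by (simp add: subst_hom_superset[OF _ k] subst_hom_superset[of ?S p] subst_hom_superset[of ?S q]
        lookup_minus single_diff left_diff_distrib sum_subtractf)
qed

lemma subst_hom_zero [simp]: "subst_hom f 0 = 0"
  by (simp add: subst_hom_def)

lemma subst_hom_sum: "subst_hom f (\<Sum>i\<in>A. g i) = (\<Sum>i\<in>A. subst_hom f (g i))"
  by (induction A rule: infinite_finite_induct) (auto simp: subst_hom_add)

lemma subst_hom_single: "subst_hom f (Poly_Mapping.single m c) = Poly_Mapping.single 0 c * mv f m"
  by (simp add: subst_hom_superset[of "{m}"] lookup_single)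

lemma poly_expand: "p = (\<Sum>m\<in>Poly_Mapping.keys p. Poly_Mapping.single m (Poly_Mapping.lookup p m))"
  by (rule poly_mapping_eqI) (auto simp: lookup_sum lookup_single when_def in_keys_iff)

lemma keys_add_nat: "Poly_Mapping.keys (f + g :: 'a \<Rightarrow>\<^sub>0 nat) = Poly_Mapping.keys f \<union> Poly_Mapping.keys g"
  by (auto simp: in_keys_iff lookup_add)

lemma poly_ring_iff: "p \<in> poly_ring X \<longleftrightarrow> (\<forall>m \<in> Poly_Mapping.keys p. Poly_Mapping.keys m \<subseteq> X)"
  unfolding poly_ring_def by simp

lemma poly_ring_add: "p \<in> poly_ring X \<Longrightarrow> q \<in> poly_ring X \<Longrightarrow> p + q \<in> poly_ring X"
  unfolding poly_ring_iff using keys_add[of p q] by (meson Un_iff subsetD)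

lemma poly_ring_uminus: "p \<in> poly_ring X \<Longrightarrow> - p \<in> poly_ring X"
  unfolding poly_ring_iff by (simp add: in_keys_iff)

lemma poly_ring_diff: "p \<in> poly_ring X \<Longrightarrow> q \<in> poly_ring X \<Longrightarrow> p - q \<in> poly_ring X"
  unfolding poly_ring_iff using keys_diff[of p q] by (meson Un_iff subsetD)

lemma poly_ring_mult:
  assumes "p \<in> poly_ring X" "q \<in> poly_ring X" shows "p * q \<in> poly_ring X"
  unfolding poly_ring_iff
proof
  fix m assume "m \<in> Poly_Mapping.keys (p * q)"
  then obtain a b where ab: "m = a + b" "a \<in> Poly_Mapping.keys p" "b \<in> Poly_Mapping.keys q"
    using keys_mult[of p q] by blast
  have "Poly_Mapping.keys a \<subseteq> X" "Poly_Mapping.keys b \<subseteq> X"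
    using assms ab unfolding poly_ring_iff by auto
  then show "Poly_Mapping.keys m \<subseteq> X" unfolding ab(1) keys_add_nat by simp
qed

lemma poly_ring_zero [simp]: "0 \<in> poly_ring X"
  unfolding poly_ring_def by simp

lemma poly_ring_one [simp]: "1 \<in> poly_ring X"
  unfolding poly_ring_def by simp

lemma poly_ring_single: "Poly_Mapping.keys m \<subseteq> X \<Longrightarrow> Poly_Mapping.single m c \<in> poly_ring X"
  unfolding poly_ring_def by simp

lemma poly_ring_const [simp]: "Poly_Mapping.single 0 c \<in> poly_ring X"
  by (rule poly_ring_single) simp

lemma poly_ring_Var: "v \<in> X \<Longrightarrow> Var v \<in> poly_ring X"
  unfolding Var_def by (rule poly_ring_single) simp

lemma ideal_gen_zero: "0 \<in> ideal_gen R G"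
  unfolding ideal_gen_def mem_Collect_eq
  by (rule exI[of _ "{}"], rule exI[of _ "\<lambda>_. 0"]) simp

lemma ideal_gen_gen:
  assumes "g \<in> G" "(1::('v,'k::comm_ring_1) mpoly) \<in> R"
  shows "g \<in> ideal_gen R G"
  unfolding ideal_gen_def mem_Collect_eq
  by (rule exI[of _ "{g}"], rule exI[of _ "\<lambda>_. 1"]) (use assms in simp)

lemma ideal_gen_add:
  assumes "p \<in> ideal_gen (poly_ring X) G" "q \<in> ideal_gen (poly_ring X) G"
  shows "p + q \<in> ideal_gen (poly_ring X) G"
proof -
  obtain F1 c1 where 1: "finite F1" "F1 \<subseteq> G" "\<forall>g\<in>F1. c1 g \<in> poly_ring X" "p = (\<Sum>g\<in>F1. c1 g * g)"
    using assms(1) unfolding ideal_gen_def by blast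
  obtain F2 c2 where 2: "finite F2" "F2 \<subseteq> G" "\<forall>g\<in>F2. c2 g \<in> poly_ring X" "q = (\<Sum>g\<in>F2. c2 g * g)"
    using assms(2) unfolding ideal_gen_def by blast
  define c where "c g = (if g \<in> F1 then c1 g else 0) + (if g \<in> F2 then c2 g else 0)" for g
  have "p = (\<Sum>g\<in>F1 \<union> F2. (if g \<in> F1 then c1 g else 0) * g)"
    unfolding 1(4) by (rule sum.mono_neutral_cong_left) (use 1 2 in simp_all)
  moreover have "q = (\<Sum>g\<in>F1 \<union> F2. (if g \<in> F2 then c2 g else 0) * g)"
    unfolding 2(4) by (rule sum.mono_neutral_cong_left) (use 1 2 in simp_all)
  ultimately have "p + q = (\<Sum>g\<in>F1 \<union> F2. c g * g)"
    by (simp add: c_def distrib_right sum.distrib)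
  moreover have "\<forall>g\<in>F1 \<union> F2. c g \<in> poly_ring X"
    using 1 2 by (auto simp: c_def intro!: poly_ring_add)
  ultimately show ?thesis using 1 2 unfolding ideal_gen_def mem_Collect_eq
    by (intro exI[of _ "F1 \<union> F2"] exI[of _ c]) simp
qed

lemma ideal_gen_mult:
  assumes "p \<in> ideal_gen (poly_ring X) G" "r \<in> poly_ring X"
  shows "r * p \<in> ideal_gen (poly_ring X) G"
proof -
  obtain F1 c1 where 1: "finite F1" "F1 \<subseteq> G" "\<forall>g\<in>F1. c1 g \<in> poly_ring X" "p = (\<Sum>g\<in>F1. c1 g * g)"
    using assms(1) unfolding ideal_gen_def by blast
  have "r * p = (\<Sum>g\<in>F1. (r * c1 g) * g)"
    unfolding 1(4) by (simp add: sum_distrib_left mult.assoc)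
  moreover have "\<forall>g\<in>F1. r * c1 g \<in> poly_ring X" using 1 assms(2) by (auto intro: poly_ring_mult)
  ultimately show ?thesis using 1 unfolding ideal_gen_def mem_Collect_eq
    by (intro exI[of _ F1] exI[of _ "\<lambda>g. r * c1 g"]) simp
qed

lemma ideal_gen_uminus:
  assumes "p \<in> ideal_gen (poly_ring X) G"
  shows "- p \<in> ideal_gen (poly_ring X) G"
proof -
  have "(-1) * p \<in> ideal_gen (poly_ring X) G"
    by (rule ideal_gen_mult[OF assms]) (simp add: poly_ring_uminus)
  then show ?thesis by simp
qed

lemma ideal_gen_diff:
  assumes "p \<in> ideal_gen (poly_ring X) G" "q \<in> ideal_gen (poly_ring X) G"
  shows "p - q \<in> ideal_gen (poly_ring X) G"
  using ideal_gen_add[OF assms(1) ideal_gen_uminus[OF assms(2)]] by simp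

lemma ideal_gen_sum:
  assumes "\<And>i. i \<in> A \<Longrightarrow> f i \<in> ideal_gen (poly_ring X) G"
  shows "(\<Sum>i\<in>A. f i) \<in> ideal_gen (poly_ring X) G"
  using assms
  by (induction A rule: infinite_finite_induct) (auto intro: ideal_gen_zero ideal_gen_add)

lemma ideal_gen_subset:
  assumes "G \<subseteq> poly_ring X"
  shows "ideal_gen (poly_ring X) G \<subseteq> poly_ring X"
proof
  fix p assume "p \<in> ideal_gen (poly_ring X) G"
  then obtain F c where 1: "finite F" "F \<subseteq> G" "\<forall>g\<in>F. c g \<in> poly_ring X" "p = (\<Sum>g\<in>F. c g * g)"
    unfolding ideal_gen_def by blast
  have "(\<Sum>g\<in>F. c g * g) \<in> poly_ring X"
    using 1(1-3) assms
    by (induction F rule: finite_induct) (auto intro!: poly_ring_add poly_ring_mult)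
  then show "p \<in> poly_ring X" using 1 by simp
qed


definition hseg :: "nat \<Rightarrow> nat \<Rightarrow> nat \<Rightarrow> pt set" where
  "hseg p q y = {(t, y) | t. p \<le> t \<and> t \<le> q}"

definition vseg :: "nat \<Rightarrow> nat \<Rightarrow> nat \<Rightarrow> pt set" where
  "vseg p q x = {(x, t) | t. p \<le> t \<and> t \<le> q}"

lemma mem_hseg [simp]: "(u, w) \<in> hseg p q y \<longleftrightarrow> w = y \<and> p \<le> u \<and> u \<le> q"
  unfolding hseg_def by auto

lemma mem_vseg [simp]: "(u, w) \<in> vseg p q x \<longleftrightarrow> u = x \<and> p \<le> w \<and> w \<le> q"
  unfolding vseg_def by auto

lemma h_edge_interval_iff:
  "h_edge_interval P I \<longleftrightarrow> (\<exists>p q y. p < q \<and> I = hseg p q y \<and> (\<forall>t. p \<le> t \<and> t < q \<longrightarrow> h_edge P (t, y)))"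
  unfolding h_edge_interval_def hseg_def by simp

lemma v_edge_interval_iff:
  "v_edge_interval P I \<longleftrightarrow> (\<exists>p q x. p < q \<and> I = vseg p q x \<and> (\<forall>t. p \<le> t \<and> t < q \<longrightarrow> v_edge P (x, t)))"
  unfolding v_edge_interval_def vseg_def by simp

lemma hi_union:
  assumes "h_edge_interval P I" "h_edge_interval P J" "v \<in> I" "v \<in> J"
  shows "h_edge_interval P (I \<union> J)"
proof -
  obtain p q y where I: "p < q" "I = hseg p q y" "\<forall>t. p \<le> t \<and> t < q \<longrightarrow> h_edge P (t, y)"
    using assms(1) unfolding h_edge_interval_iff by blast
  obtain p' q' y' where J: "p' < q'" "J = hseg p' q' y'" "\<forall>t. p' \<le> t \<and> t < q' \<longrightarrow> h_edge P (t, y')"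
    using assms(2) unfolding h_edge_interval_iff by blast
  obtain x w where v: "v = (x, w)" by (cases v)
  have yy: "y' = y" "w = y" using assms(3,4) I(2) J(2) v by auto
  have ov: "p \<le> x" "x \<le> q" "p' \<le> x" "x \<le> q'" using assms(3,4) I(2) J(2) v by auto
  have "I \<union> J = hseg (min p p') (max q q') y"
  proof (rule set_eqI)
    fix z show "z \<in> I \<union> J \<longleftrightarrow> z \<in> hseg (min p p') (max q q') y"
      using ov unfolding I(2) J(2) yy by (cases z) auto
  qed
  moreover have "\<forall>t. min p p' \<le> t \<and> t < max q q' \<longrightarrow> h_edge P (t, y)"
  proof (intro allI impI)
    fix t assume t: "min p p' \<le> t \<and> t < max q q'"
    then have "(p \<le> t \<and> t < q) \<or> (p' \<le> t \<and> t < q')" using ov by linarith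
    then show "h_edge P (t, y)" using I(3) J(3) yy by blast
  qed
  moreover have "min p p' < max q q'" using I(1) by linarith
  ultimately show ?thesis unfolding h_edge_interval_iff by blast
qed

lemma vi_union:
  assumes "v_edge_interval P I" "v_edge_interval P J" "v \<in> I" "v \<in> J"
  shows "v_edge_interval P (I \<union> J)"
proof -
  obtain p q y where I: "p < q" "I = vseg p q y" "\<forall>t. p \<le> t \<and> t < q \<longrightarrow> v_edge P (y, t)"
    using assms(1) unfolding v_edge_interval_iff by blast
  obtain p' q' y' where J: "p' < q'" "J = vseg p' q' y'" "\<forall>t. p' \<le> t \<and> t < q' \<longrightarrow> v_edge P (y', t)"
    using assms(2) unfolding v_edge_interval_iff by blast
  obtain x w where v: "v = (w, x)" by (cases v)
  have yy: "y' = y" "w = y" using assms(3,4) I(2) J(2) v by auto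
  have ov: "p \<le> x" "x \<le> q" "p' \<le> x" "x \<le> q'" using assms(3,4) I(2) J(2) v by auto
  have "I \<union> J = vseg (min p p') (max q q') y"
  proof (rule set_eqI)
    fix z show "z \<in> I \<union> J \<longleftrightarrow> z \<in> vseg (min p p') (max q q') y"
      using ov unfolding I(2) J(2) yy by (cases z) auto
  qed
  moreover have "\<forall>t. min p p' \<le> t \<and> t < max q q' \<longrightarrow> v_edge P (y, t)"
  proof (intro allI impI)
    fix t assume t: "min p p' \<le> t \<and> t < max q q'"
    then have "(p \<le> t \<and> t < q) \<or> (p' \<le> t \<and> t < q')" using ov by linarith
    then show "v_edge P (y, t)" using I(3) J(3) yy by blast
  qed
  moreover have "min p p' < max q q'" using I(1) by linarith
  ultimately show ?thesis unfolding v_edge_interval_iff by blast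
qed

lemma hmax_unique:
  assumes "max_h_interval P I" "max_h_interval P J" "v \<in> I" "v \<in> J"
  shows "I = J"
proof -
  have u: "h_edge_interval P (I \<union> J)"
    by (rule hi_union[OF _ _ assms(3,4)]) (use assms(1,2) in \<open>simp_all add: max_h_interval_def\<close>)
  have "\<not> I \<subset> I \<union> J" "\<not> J \<subset> I \<union> J" using assms(1,2) u unfolding max_h_interval_def by metis+
  then show ?thesis by (simp add: psubset_eq) (metis Un_upper2 sup.order_iff)
qed

lemma vmax_unique:
  assumes "max_v_interval P I" "max_v_interval P J" "v \<in> I" "v \<in> J"
  shows "I = J"
proof -
  have u: "v_edge_interval P (I \<union> J)"
    by (rule vi_union[OF _ _ assms(3,4)]) (use assms(1,2) in \<open>simp_all add: max_v_interval_def\<close>)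
  have "\<not> I \<subset> I \<union> J" "\<not> J \<subset> I \<union> J" using assms(1,2) u unfolding max_v_interval_def by metis+
  then show ?thesis by (simp add: psubset_eq) (metis Un_upper2 sup.order_iff)
qed

lemma Hint_eqI:
  assumes "max_h_interval P I" "w \<in> I" shows "Hint P w = I"
  unfolding Hint_def
proof (rule the_equality)
  show "max_h_interval P I \<and> w \<in> I" using assms by simp
next
  fix J assume "max_h_interval P J \<and> w \<in> J"
  then show "J = I" using hmax_unique[of P J I w] assms by simp
qed

lemma Vint_eqI:
  assumes "max_v_interval P I" "w \<in> I" shows "Vint P w = I"
  unfolding Vint_def
proof (rule the_equality)
  show "max_v_interval P I \<and> w \<in> I" using assms by simp
next
  fix J assume "max_v_interval P J \<and> w \<in> J"
  then show "J = I" using vmax_unique[of P J I w] assms by simp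
qed

lemma exists_max_card:
  assumes "finite F" "X \<in> F" "\<And>Y. Y \<in> F \<Longrightarrow> finite Y"
  shows "\<exists>Z\<in>F. \<forall>Y\<in>F. \<not> Z \<subset> Y"
proof -
  have ne: "card ` F \<noteq> {}" using assms(2) by blast
  have "Max (card ` F) \<in> card ` F" using Max_in[OF finite_imageI[OF assms(1)] ne] .
  then obtain Z where Z: "Z \<in> F" "card Z = Max (card ` F)" by force
  have "\<forall>Y\<in>F. \<not> Z \<subset> Y"
  proof (intro ballI notI)
    fix Y assume Y: "Y \<in> F" "Z \<subset> Y"
    have "card Z < card Y" using psubset_card_mono[OF assms(3)[OF Y(1)] Y(2)] .
    moreover have "card Y \<le> Max (card ` F)" using Y(1) assms(1) by simp
    ultimately show False using Z(2) by simp
  qed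
  then show ?thesis using Z(1) by blast
qed

locale gp =
  fixes m n r s :: nat and a b :: "nat \<Rightarrow> nat \<Rightarrow> nat \<times> nat"
  assumes gd: "grid_data m n r s a b"
begin

abbreviation "PP \<equiv> grid_polyomino m n r s a b"
abbreviation "VV \<equiv> vertices PP"

lemma cell_P: "c \<in> PP \<longleftrightarrow> (1 \<le> fst c \<and> fst c + 1 \<le> m \<and> 1 \<le> snd c \<and> snd c + 1 \<le> n \<and>
   \<not> (\<exists>i\<in>{1..r}. \<exists>j\<in>{1..s}. cell_in c (a i j) (b i j)))"
  unfolding grid_polyomino_def cell_in_def by auto

lemma vert_iff: "v \<in> VV \<longleftrightarrow> (\<exists>c dx dy. c \<in> PP \<and> dx \<le> 1 \<and> dy \<le> 1 \<and> v = (fst c + dx, snd c + dy))"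
  unfolding vertices_def by blast

lemma vert_bounds:
  assumes "v \<in> VV" shows "1 \<le> fst v" "fst v \<le> m" "1 \<le> snd v" "snd v \<le> n"
  using assms unfolding vert_iff cell_P by auto

lemma h_edge_bound: "h_edge PP (t, y) \<Longrightarrow> t + 1 \<le> m \<and> y \<le> n"
  unfolding h_edge_def cell_P by auto

lemma v_edge_bound: "v_edge PP (x, t) \<Longrightarrow> t + 1 \<le> n \<and> x \<le> m"
  unfolding v_edge_def cell_P by auto

lemma hi_exists:
  assumes "v \<in> VV" shows "\<exists>I. h_edge_interval PP I \<and> v \<in> I"
proof -
  obtain c dx dy where c: "c \<in> PP" "dx \<le> 1" "dy \<le> 1" "v = (fst c + dx, snd c + dy)"
    using assms unfolding vert_iff by blast
  have "dy = 0 \<or> dy = 1" using c(3) by arith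
  then have e: "h_edge PP (fst c, snd c + dy)"
    using c(1) unfolding h_edge_def by auto
  have "h_edge_interval PP (hseg (fst c) (fst c + 1) (snd c + dy))"
    unfolding h_edge_interval_iff
    by (rule exI[of _ "fst c"], rule exI[of _ "fst c + 1"], rule exI[of _ "snd c + dy"])
       (use e in \<open>auto simp: less_Suc_eq_le dest: le_antisym\<close>)
  moreover have "v \<in> hseg (fst c) (fst c + 1) (snd c + dy)" using c by auto
  ultimately show ?thesis by blast
qed

lemma vi_exists:
  assumes "v \<in> VV" shows "\<exists>I. v_edge_interval PP I \<and> v \<in> I"
proof -
  obtain c dx dy where c: "c \<in> PP" "dx \<le> 1" "dy \<le> 1" "v = (fst c + dx, snd c + dy)"
    using assms unfolding vert_iff by blast
  have "dx = 0 \<or> dx = 1" using c(2) by arith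
  then have e: "v_edge PP (fst c + dx, snd c)"
    using c(1) unfolding v_edge_def by auto
  have "v_edge_interval PP (vseg (snd c) (snd c + 1) (fst c + dx))"
    unfolding v_edge_interval_iff
    by (rule exI[of _ "snd c"], rule exI[of _ "snd c + 1"], rule exI[of _ "fst c + dx"])
       (use e in \<open>auto simp: less_Suc_eq_le dest: le_antisym\<close>)
  moreover have "v \<in> vseg (snd c) (snd c + 1) (fst c + dx)" using c by auto
  ultimately show ?thesis by blast
qed

lemma hi_subset: "h_edge_interval PP I \<Longrightarrow> I \<subseteq> {0..m} \<times> {0..n}"
proof -
  assume "h_edge_interval PP I"
  then obtain p q y where I: "p < q" "I = hseg p q y" "\<forall>t. p \<le> t \<and> t < q \<longrightarrow> h_edge PP (t, y)"
    unfolding h_edge_interval_iff by blast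
  have "h_edge PP (q - 1, y)" using I by auto
  then have "q \<le> m" "y \<le> n" using h_edge_bound I(1) by fastforce+
  then show "I \<subseteq> {0..m} \<times> {0..n}" using I(2) by auto
qed

lemma vi_subset: "v_edge_interval PP I \<Longrightarrow> I \<subseteq> {0..m} \<times> {0..n}"
proof -
  assume "v_edge_interval PP I"
  then obtain p q y where I: "p < q" "I = vseg p q y" "\<forall>t. p \<le> t \<and> t < q \<longrightarrow> v_edge PP (y, t)"
    unfolding v_edge_interval_iff by blast
  have "v_edge PP (y, q - 1)" using I by auto
  then have "q \<le> n" "y \<le> m" using v_edge_bound I(1) by fastforce+
  then show "I \<subseteq> {0..m} \<times> {0..n}" using I(2) by auto
qed

lemma hmax_exists:
  assumes "v \<in> VV" shows "\<exists>I. max_h_interval PP I \<and> v \<in> I"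
proof -
  let ?F = "{I. h_edge_interval PP I \<and> v \<in> I}"
  obtain X where X: "X \<in> ?F" using hi_exists[OF assms] by blast
  have fin: "finite ?F"
    by (rule finite_subset[of _ "Pow ({0..m} \<times> {0..n})"]) (use hi_subset in auto)
  have fin2: "\<And>Y. Y \<in> ?F \<Longrightarrow> finite Y"
    using hi_subset finite_subset by blast
  obtain Z where Z: "Z \<in> ?F" "\<forall>Y\<in>?F. \<not> Z \<subset> Y" using exists_max_card[OF fin X fin2] by blast
  have "max_h_interval PP Z"
    unfolding max_h_interval_def using Z by blast
  then show ?thesis using Z(1) by blast
qed

lemma vmax_exists:
  assumes "v \<in> VV" shows "\<exists>I. max_v_interval PP I \<and> v \<in> I"
proof -
  let ?F = "{I. v_edge_interval PP I \<and> v \<in> I}"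
  obtain X where X: "X \<in> ?F" using vi_exists[OF assms] by blast
  have fin: "finite ?F"
    by (rule finite_subset[of _ "Pow ({0..m} \<times> {0..n})"]) (use vi_subset in auto)
  have fin2: "\<And>Y. Y \<in> ?F \<Longrightarrow> finite Y"
    using vi_subset finite_subset by blast
  obtain Z where Z: "Z \<in> ?F" "\<forall>Y\<in>?F. \<not> Z \<subset> Y" using exists_max_card[OF fin X fin2] by blast
  have "max_v_interval PP Z"
    unfolding max_v_interval_def using Z by blast
  then show ?thesis using Z(1) by blast
qed

lemma Hint_prop: "v \<in> VV \<Longrightarrow> max_h_interval PP (Hint PP v) \<and> v \<in> Hint PP v"
  using hmax_exists Hint_eqI by metis

lemma Vint_prop: "v \<in> VV \<Longrightarrow> max_v_interval PP (Vint PP v) \<and> v \<in> Vint PP v"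
  using vmax_exists Vint_eqI by metis

lemma Hint_row:
  assumes "v \<in> VV" "w \<in> Hint PP v"
  shows "snd w = snd v \<and> (\<forall>t. min (fst v) (fst w) \<le> t \<and> t < max (fst v) (fst w) \<longrightarrow> h_edge PP (t, snd v))"
proof -
  have "h_edge_interval PP (Hint PP v)" "v \<in> Hint PP v"
    using Hint_prop[OF assms(1)] unfolding max_h_interval_def by auto
  then obtain p q y where I: "p < q" "Hint PP v = hseg p q y" "\<forall>t. p \<le> t \<and> t < q \<longrightarrow> h_edge PP (t, y)"
    "v \<in> hseg p q y"
    unfolding h_edge_interval_iff by auto
  have "w \<in> hseg p q y" using assms(2) I(2) by simp
  then obtain w2 v2 where wv: "w = (w2, y)" "v = (v2, y)" "p \<le> w2" "w2 \<le> q" "p \<le> v2" "v2 \<le> q"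
    using I(4) by (cases v, cases w) auto
  have "\<forall>t. min v2 w2 \<le> t \<and> t < max v2 w2 \<longrightarrow> h_edge PP (t, y)"
  proof (intro allI impI)
    fix t assume "min v2 w2 \<le> t \<and> t < max v2 w2"
    then have "p \<le> t \<and> t < q" using wv by linarith
    then show "h_edge PP (t, y)" using I(3) by blast
  qed
  then show ?thesis using wv by simp
qed

lemma Vint_col:
  assumes "v \<in> VV" "w \<in> Vint PP v"
  shows "fst w = fst v \<and> (\<forall>t. min (snd v) (snd w) \<le> t \<and> t < max (snd v) (snd w) \<longrightarrow> v_edge PP (fst v, t))"
proof -
  have "v_edge_interval PP (Vint PP v)" "v \<in> Vint PP v"
    using Vint_prop[OF assms(1)] unfolding max_v_interval_def by auto
  then obtain p q y where I: "p < q" "Vint PP v = vseg p q y" "\<forall>t. p \<le> t \<and> t < q \<longrightarrow> v_edge PP (y, t)"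
    "v \<in> vseg p q y"
    unfolding v_edge_interval_iff by auto
  have "w \<in> vseg p q y" using assms(2) I(2) by simp
  then obtain w2 v2 where wv: "w = (y, w2)" "v = (y, v2)" "p \<le> w2" "w2 \<le> q" "p \<le> v2" "v2 \<le> q"
    using I(4) by (cases v, cases w) auto
  have "\<forall>t. min v2 w2 \<le> t \<and> t < max v2 w2 \<longrightarrow> v_edge PP (y, t)"
  proof (intro allI impI)
    fix t assume "min v2 w2 \<le> t \<and> t < max v2 w2"
    then have "p \<le> t \<and> t < q" using wv by linarith
    then show "v_edge PP (y, t)" using I(3) by blast
  qed
  then show ?thesis using wv by simp
qed

lemma Hint_same:
  assumes "v \<in> VV" "w \<in> VV" "Hint PP w = Hint PP v"
  shows "snd w = snd v \<and> (\<forall>t. min (fst v) (fst w) \<le> t \<and> t < max (fst v) (fst w) \<longrightarrow> h_edge PP (t, snd v))"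
proof -
  have "w \<in> Hint PP v" using Hint_prop[OF assms(2)] assms(3) by simp
  then show ?thesis using Hint_row[OF assms(1)] by blast
qed

lemma Vint_same:
  assumes "v \<in> VV" "w \<in> VV" "Vint PP w = Vint PP v"
  shows "fst w = fst v \<and> (\<forall>t. min (snd v) (snd w) \<le> t \<and> t < max (snd v) (snd w) \<longrightarrow> v_edge PP (fst v, t))"
proof -
  have "w \<in> Vint PP v" using Vint_prop[OF assms(2)] assms(3) by simp
  then show ?thesis using Vint_col[OF assms(1)] by blast
qed

lemma Hint_join:
  assumes "v \<in> VV" "snd w = snd v"
    "\<forall>t. min (fst v) (fst w) \<le> t \<and> t < max (fst v) (fst w) \<longrightarrow> h_edge PP (t, snd v)"
  shows "Hint PP w = Hint PP v"
proof (cases "fst v = fst w")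
  case True
  then have "w = v" using assms(2) by (cases v, cases w) auto
  then show ?thesis by simp
next
  case False
  let ?S = "hseg (min (fst v) (fst w)) (max (fst v) (fst w)) (snd v)"
  have S: "h_edge_interval PP ?S"
    unfolding h_edge_interval_iff
    by (rule exI[of _ "min (fst v) (fst w)"], rule exI[of _ "max (fst v) (fst w)"], rule exI[of _ "snd v"])
       (use False assms(3) in auto)
  have vS: "v \<in> ?S" "w \<in> ?S" using assms(2) by (cases v, simp, cases w, simp)
  have H: "max_h_interval PP (Hint PP v)" "v \<in> Hint PP v" using Hint_prop[OF assms(1)] by auto
  have "h_edge_interval PP (Hint PP v \<union> ?S)"
    by (rule hi_union[OF _ S H(2) vS(1)]) (use H(1) in \<open>simp add: max_h_interval_def\<close>)
  then have "\<not> Hint PP v \<subset> Hint PP v \<union> ?S" using H(1) unfolding max_h_interval_def by blast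
  then have "w \<in> Hint PP v" using vS(2) by blast
  then show ?thesis using Hint_eqI H(1) by blast
qed

lemma Vint_join:
  assumes "v \<in> VV" "fst w = fst v"
    "\<forall>t. min (snd v) (snd w) \<le> t \<and> t < max (snd v) (snd w) \<longrightarrow> v_edge PP (fst v, t)"
  shows "Vint PP w = Vint PP v"
proof (cases "snd v = snd w")
  case True
  then have "w = v" using assms(2) by (cases v, cases w) auto
  then show ?thesis by simp
next
  case False
  let ?S = "vseg (min (snd v) (snd w)) (max (snd v) (snd w)) (fst v)"
  have S: "v_edge_interval PP ?S"
    unfolding v_edge_interval_iff
    by (rule exI[of _ "min (snd v) (snd w)"], rule exI[of _ "max (snd v) (snd w)"], rule exI[of _ "fst v"])
       (use False assms(3) in auto)
  have vS: "v \<in> ?S" "w \<in> ?S" using assms(2) by (cases v, simp, cases w, simp)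
  have H: "max_v_interval PP (Vint PP v)" "v \<in> Vint PP v" using Vint_prop[OF assms(1)] by auto
  have "v_edge_interval PP (Vint PP v \<union> ?S)"
    by (rule vi_union[OF _ S H(2) vS(1)]) (use H(1) in \<open>simp add: max_v_interval_def\<close>)
  then have "\<not> Vint PP v \<subset> Vint PP v \<union> ?S" using H(1) unfolding max_v_interval_def by blast
  then have "w \<in> Vint PP v" using vS(2) by blast
  then show ?thesis using Vint_eqI H(1) by blast
qed

end


definition mon :: "pt multiset \<Rightarrow> (pt, 'k::comm_ring_1) mpoly" where
  "mon U = Poly_Mapping.single (expo U) 1"

lemma mon_add: "(mon (U + W) :: (pt,'k::comm_ring_1) mpoly) = mon U * mon W"
  unfolding mon_def by (simp add: mult_single expo_add)

lemma prod_single: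
  "(\<Prod>x\<in>A. Poly_Mapping.single (f x) (1::'k::comm_ring_1)) = Poly_Mapping.single (\<Sum>x\<in>A. f x) 1"
  by (induction A rule: infinite_finite_induct) (auto simp: mult_single)

lemma sum_mset_indicator:
  "sum_mset (image_mset (\<lambda>v. if Q v then 1 else 0) U) = size (filter_mset Q U)"
  by (induction U) auto

lemma count_image_size: "count (image_mset f U) x = size (filter_mset (\<lambda>v. f v = x) U)"
  by (induction U) auto

lemma size_filter_image:
  "size (filter_mset (\<lambda>v. G (f v)) U) = size (filter_mset G (image_mset f U))"
  by (simp add: filter_mset_image_mset)

lemma lookup_sum_mset:
  "Poly_Mapping.lookup (sum_mset M) t = sum_mset (image_mset (\<lambda>x. Poly_Mapping.lookup x t) M)"
  by (induction M) (auto simp: lookup_add)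

context gp
begin

definition Wset :: "pt \<Rightarrow> (nat \<times> nat) set" where
  "Wset v = {(i,j). i \<in> {1..r} \<and> j \<in> {1..s} \<and> v \<in> Fset PP a i j}"

definition img :: "pt \<Rightarrow> (tvar \<Rightarrow>\<^sub>0 nat)" where
  "img v = Poly_Mapping.single (Th (Hint PP v)) 1 + Poly_Mapping.single (Tv (Vint PP v)) 1 +
     (\<Sum>x\<in>Wset v. Poly_Mapping.single (Tw (fst x) (snd x)) 1)"

definition Ee :: "pt multiset \<Rightarrow> (tvar \<Rightarrow>\<^sub>0 nat)" where
  "Ee U = sum_mset (image_mset img U)"

lemma finite_Wset: "finite (Wset v)"
  by (rule finite_subset[of _ "{1..r} \<times> {1..s}"]) (auto simp: Wset_def)

lemma phi_var_eq: "(phi_var PP r s a v :: (tvar,'k::comm_ring_1) mpoly) = Poly_Mapping.single (img v) 1"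
proof -
  have "(\<Prod>(i,j)\<in>Wset v. (Var (Tw i j) :: (tvar,'k) mpoly)) =
        (\<Prod>x\<in>Wset v. Poly_Mapping.single (Poly_Mapping.single (Tw (fst x) (snd x)) 1) 1)"
    by (rule prod.cong) (auto simp: Var_def)
  also have "\<dots> = Poly_Mapping.single (\<Sum>x\<in>Wset v. Poly_Mapping.single (Tw (fst x) (snd x)) 1) 1"
    by (rule prod_single)
  finally have "(\<Prod>(i,j)\<in>Wset v. (Var (Tw i j) :: (tvar,'k) mpoly)) = \<dots>" .
  then show ?thesis
    unfolding phi_var_def img_def Wset_def[symmetric]
    by (simp add: Var_def mult_single)
qed

lemma phi_var_fun: "(phi_var PP r s a :: pt \<Rightarrow> (tvar,'k::comm_ring_1) mpoly) = (\<lambda>v. Poly_Mapping.single (img v) 1)"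
  by (rule ext) (rule phi_var_eq)

lemma prod_mset_img:
  "prod_mset (image_mset (\<lambda>v. Poly_Mapping.single (img v) (1::'k::comm_ring_1)) U) = Poly_Mapping.single (Ee U) 1"
  unfolding Ee_def by (induction U) (auto simp: mult_single add.commute)

lemma mv_phi: "(mv (phi_var PP r s a) (expo U) :: (tvar,'k::comm_ring_1) mpoly) = Poly_Mapping.single (Ee U) 1"
  by (simp add: phi_var_fun mv_expo prod_mset_img)

lemma subst_mon: "subst_hom (phi_var PP r s a) (mon U :: (pt,'k::comm_ring_1) mpoly) = Poly_Mapping.single (Ee U) 1"
  unfolding mon_def by (simp add: subst_hom_single mv_phi)

lemma Ee_add [simp]: "Ee (U + W) = Ee U + Ee W"
  unfolding Ee_def by simp

lemma Ee_add_mset [simp]: "Ee (add_mset v U) = img v + Ee U"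
  unfolding Ee_def by simp

lemma Ee_empty [simp]: "Ee {#} = 0"
  unfolding Ee_def by simp

lemma lookup_Wsum_Th: "Poly_Mapping.lookup (\<Sum>x\<in>Wset v. Poly_Mapping.single (Tw (fst x) (snd x)) (1::nat)) (Th I) = 0"
  by (subst lookup_sum) (simp add: lookup_single)

lemma lookup_Wsum_Tv: "Poly_Mapping.lookup (\<Sum>x\<in>Wset v. Poly_Mapping.single (Tw (fst x) (snd x)) (1::nat)) (Tv I) = 0"
  by (subst lookup_sum) (simp add: lookup_single)

lemma lookup_Wsum_Tw: "Poly_Mapping.lookup (\<Sum>x\<in>Wset v. Poly_Mapping.single (Tw (fst x) (snd x)) (1::nat)) (Tw i j)
   = (if (i,j) \<in> Wset v then 1 else 0)"
proof -
  have "Poly_Mapping.lookup (\<Sum>x\<in>Wset v. Poly_Mapping.single (Tw (fst x) (snd x)) (1::nat)) (Tw i j)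
        = (\<Sum>x\<in>Wset v. if x = (i,j) then 1 else 0)"
    by (subst lookup_sum) (rule sum.cong, auto simp: lookup_single when_def)
  also have "\<dots> = (if (i,j) \<in> Wset v then 1 else 0)"
    using finite_Wset by (simp add: sum.delta)
  finally show ?thesis .
qed

lemma lookup_img_Th: "Poly_Mapping.lookup (img v) (Th I) = (if Hint PP v = I then 1 else 0)"
  unfolding img_def lookup_add lookup_Wsum_Th by (simp add: lookup_single when_def)

lemma lookup_img_Tv: "Poly_Mapping.lookup (img v) (Tv I) = (if Vint PP v = I then 1 else 0)"
  unfolding img_def lookup_add lookup_Wsum_Tv by (simp add: lookup_single when_def)

lemma lookup_img_Tw: "Poly_Mapping.lookup (img v) (Tw i j) = (if (i,j) \<in> Wset v then 1 else 0)"
  unfolding img_def lookup_add lookup_Wsum_Tw by (simp add: lookup_single when_def)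

lemma lookup_Ee_Th: "Poly_Mapping.lookup (Ee U) (Th I) = size (filter_mset (\<lambda>v. Hint PP v = I) U)"
  unfolding Ee_def lookup_sum_mset by (simp add: image_mset.compositionality o_def lookup_img_Th sum_mset_indicator)

lemma lookup_Ee_Tv: "Poly_Mapping.lookup (Ee U) (Tv I) = size (filter_mset (\<lambda>v. Vint PP v = I) U)"
  unfolding Ee_def lookup_sum_mset by (simp add: image_mset.compositionality o_def lookup_img_Tv sum_mset_indicator)

lemma lookup_Ee_Tw: "Poly_Mapping.lookup (Ee U) (Tw i j) = size (filter_mset (\<lambda>v. (i,j) \<in> Wset v) U)"
  unfolding Ee_def lookup_sum_mset by (simp add: image_mset.compositionality o_def lookup_img_Tw sum_mset_indicator)

lemma inv_H:
  assumes "Ee U = Ee U'"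
  shows "image_mset (Hint PP) U = image_mset (Hint PP) U'"
  by (rule multiset_eqI) (metis count_image_size lookup_Ee_Th assms)

lemma inv_V:
  assumes "Ee U = Ee U'"
  shows "image_mset (Vint PP) U = image_mset (Vint PP) U'"
  by (rule multiset_eqI) (metis count_image_size lookup_Ee_Tv assms)

lemma inv_W:
  assumes "Ee U = Ee U'" "i \<in> {1..r}" "j \<in> {1..s}"
  shows "size (filter_mset (\<lambda>v. v \<in> Fset PP a i j) U) = size (filter_mset (\<lambda>v. v \<in> Fset PP a i j) U')"
proof -
  have "\<And>v. (i,j) \<in> Wset v \<longleftrightarrow> v \<in> Fset PP a i j" using assms(2,3) unfolding Wset_def by auto
  then show ?thesis using lookup_Ee_Tw[of U i j] lookup_Ee_Tw[of U' i j] assms(1) by simp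
qed

lemma inv_HG:
  assumes "Ee U = Ee U'"
  shows "size (filter_mset (\<lambda>v. G (Hint PP v)) U) = size (filter_mset (\<lambda>v. G (Hint PP v)) U')"
  unfolding size_filter_image inv_H[OF assms] ..

lemma inv_VG:
  assumes "Ee U = Ee U'"
  shows "size (filter_mset (\<lambda>v. G (Vint PP v)) U) = size (filter_mset (\<lambda>v. G (Vint PP v)) U')"
  unfolding size_filter_image inv_V[OF assms] ..

end


context gp
begin

lemma gd_ab:
  assumes "i \<in> {1..r}" "j \<in> {1..s}"
  shows "1 < fst (a i j)" "fst (a i j) < fst (b i j)" "fst (b i j) < m"
        "1 < snd (a i j)" "snd (a i j) < snd (b i j)" "snd (b i j) < n"
  using gd assms unfolding grid_data_def by blast+

lemma gd_col:
  assumes "i \<in> {1..r}" "j \<in> {1..s}" "k \<in> {1..s}"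
  shows "fst (a i j) = fst (a i k)" "fst (b i j) = fst (b i k)"
  using gd assms unfolding grid_data_def by blast+

lemma gd_row:
  assumes "j \<in> {1..s}" "i \<in> {1..r}" "k \<in> {1..r}"
  shows "snd (a i j) = snd (a k j)" "snd (b i j) = snd (b k j)"
  using gd assms unfolding grid_data_def by blast+

lemma hole_notin:
  assumes "i \<in> {1..r}" "j \<in> {1..s}" "cell_in c (a i j) (b i j)"
  shows "c \<notin> PP"
  using assms unfolding cell_P by blast

lemma corner_notin:
  assumes "i \<in> {1..r}" "j \<in> {1..s}"
  shows "a i j \<notin> PP"
  using hole_notin[OF assms] gd_ab[OF assms] unfolding cell_in_def by simp

definition rel :: "('k::comm_ring_1) itself \<Rightarrow> pt multiset \<Rightarrow> pt multiset \<Rightarrow> bool" where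
  "rel (_::'k itself) U U' \<longleftrightarrow> (mon U - mon U' :: (pt,'k) mpoly) \<in> polyomino_ideal PP"

definition GG :: "(pt,'k::comm_ring_1) mpoly set" where
  "GG = {Var p * Var q - Var (fst p, snd q) * Var (fst q, snd p) | p q. inner_interval PP p q}"

lemma IP_eq: "polyomino_ideal PP = ideal_gen (poly_ring VV) GG"
  unfolding polyomino_ideal_def GG_def ..

lemma rel_refl: "rel TYPE('k::comm_ring_1) U U"
  unfolding rel_def IP_eq by (simp add: ideal_gen_zero)

lemma rel_sym: "rel TYPE('k::comm_ring_1) U U' \<Longrightarrow> rel TYPE('k) U' U"
  unfolding rel_def IP_eq using ideal_gen_uminus by fastforce

lemma rel_trans: "rel TYPE('k::comm_ring_1) U U' \<Longrightarrow> rel TYPE('k) U' U'' \<Longrightarrow> rel TYPE('k) U U''"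
  unfolding rel_def IP_eq using ideal_gen_add by fastforce

lemma mon_in: "set_mset W \<subseteq> VV \<Longrightarrow> (mon W :: (pt,'k::comm_ring_1) mpoly) \<in> poly_ring VV"
  unfolding mon_def by (rule poly_ring_single) simp

lemma rel_add:
  assumes "rel TYPE('k::comm_ring_1) U U'" "set_mset W \<subseteq> VV"
  shows "rel TYPE('k) (U + W) (U' + W)"
proof -
  have "(mon (U + W) - mon (U' + W) :: (pt,'k) mpoly) = mon W * (mon U - mon U')"
    by (simp add: mon_add algebra_simps)
  moreover have "(mon W * (mon U - mon U') :: (pt,'k) mpoly) \<in> polyomino_ideal PP"
    using assms unfolding rel_def IP_eq by (intro ideal_gen_mult mon_in) auto
  ultimately show ?thesis unfolding rel_def by simp
qed

lemma inner_verts: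
  assumes "inner_interval PP A B"
  shows "A \<in> VV" "B \<in> VV" "(fst A, snd B) \<in> VV" "(fst B, snd A) \<in> VV"
proof -
  have lt: "fst A < fst B" "snd A < snd B" and cells: "\<And>c. cell_in c A B \<Longrightarrow> c \<in> PP"
    using assms unfolding inner_interval_def by auto
  have ar: "fst A \<le> fst B - 1" "fst B - 1 + 1 = fst B" "snd A \<le> snd B - 1" "snd B - 1 + 1 = snd B"
    using lt by arith+
  have c1: "A \<in> PP" by (rule cells) (use lt ar in \<open>simp add: cell_in_def\<close>)
  have c2: "(fst B - 1, snd B - 1) \<in> PP" by (rule cells) (use lt ar in \<open>simp add: cell_in_def\<close>)
  have c3: "(fst A, snd B - 1) \<in> PP" by (rule cells) (use lt ar in \<open>simp add: cell_in_def\<close>)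
  have c4: "(fst B - 1, snd A) \<in> PP" by (rule cells) (use lt ar in \<open>simp add: cell_in_def\<close>)
  show "A \<in> VV" unfolding vert_iff
    by (rule exI[of _ A], rule exI[of _ 0], rule exI[of _ 0]) (use c1 in simp)
  show "B \<in> VV" unfolding vert_iff
    by (rule exI[of _ "(fst B - 1, snd B - 1)"], rule exI[of _ 1], rule exI[of _ 1]) (use c2 lt in \<open>cases B, auto\<close>)
  show "(fst A, snd B) \<in> VV" unfolding vert_iff
    by (rule exI[of _ "(fst A, snd B - 1)"], rule exI[of _ 0], rule exI[of _ 1]) (use c3 lt in auto)
  show "(fst B, snd A) \<in> VV" unfolding vert_iff
    by (rule exI[of _ "(fst B - 1, snd A)"], rule exI[of _ 1], rule exI[of _ 0]) (use c4 lt in auto)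
qed

lemma Fset_iff: "v \<in> VV \<Longrightarrow> v \<in> Fset PP a i j \<longleftrightarrow> fst v \<le> fst (a i j) \<and> snd v \<le> snd (a i j)"
  unfolding Fset_def by simp

lemma inner_img:
  assumes "inner_interval PP A B"
  shows "img A + img B = img (fst A, snd B) + img (fst B, snd A)"
proof -
  let ?C = "(fst A, snd B)" and ?D = "(fst B, snd A)"
  have lt: "fst A < fst B" "snd A < snd B" and cells: "\<And>c. cell_in c A B \<Longrightarrow> c \<in> PP"
    using assms unfolding inner_interval_def by auto
  note V = inner_verts[OF assms]
  have hAD: "Hint PP ?D = Hint PP A"
  proof (rule Hint_join[OF V(1)])
    show "snd ?D = snd A" by simp
    show "\<forall>t. min (fst A) (fst ?D) \<le> t \<and> t < max (fst A) (fst ?D) \<longrightarrow> h_edge PP (t, snd A)"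
    proof (intro allI impI)
      fix t assume "min (fst A) (fst ?D) \<le> t \<and> t < max (fst A) (fst ?D)"
      then have "cell_in (t, snd A) A B" using lt by (simp add: cell_in_def)
      then show "h_edge PP (t, snd A)" using cells unfolding h_edge_def by blast
    qed
  qed
  have hBC: "Hint PP ?C = Hint PP B"
  proof (rule Hint_join[OF V(2)])
    show "snd ?C = snd B" by simp
    show "\<forall>t. min (fst B) (fst ?C) \<le> t \<and> t < max (fst B) (fst ?C) \<longrightarrow> h_edge PP (t, snd B)"
    proof (intro allI impI)
      fix t assume "min (fst B) (fst ?C) \<le> t \<and> t < max (fst B) (fst ?C)"
      then have "cell_in (t, snd B - 1) A B" using lt by (simp add: cell_in_def)
      then show "h_edge PP (t, snd B)" using cells lt unfolding h_edge_def by auto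
    qed
  qed
  have vAC: "Vint PP ?C = Vint PP A"
  proof (rule Vint_join[OF V(1)])
    show "fst ?C = fst A" by simp
    show "\<forall>t. min (snd A) (snd ?C) \<le> t \<and> t < max (snd A) (snd ?C) \<longrightarrow> v_edge PP (fst A, t)"
    proof (intro allI impI)
      fix t assume "min (snd A) (snd ?C) \<le> t \<and> t < max (snd A) (snd ?C)"
      then have "cell_in (fst A, t) A B" using lt by (simp add: cell_in_def)
      then show "v_edge PP (fst A, t)" using cells unfolding v_edge_def by blast
    qed
  qed
  have vBD: "Vint PP ?D = Vint PP B"
  proof (rule Vint_join[OF V(2)])
    show "fst ?D = fst B" by simp
    show "\<forall>t. min (snd B) (snd ?D) \<le> t \<and> t < max (snd B) (snd ?D) \<longrightarrow> v_edge PP (fst B, t)"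
    proof (intro allI impI)
      fix t assume "min (snd B) (snd ?D) \<le> t \<and> t < max (snd B) (snd ?D)"
      then have "cell_in (fst B - 1, t) A B" using lt by (simp add: cell_in_def)
      then show "v_edge PP (fst B, t)" using cells lt unfolding v_edge_def by auto
    qed
  qed
  have W: "(if (i,j) \<in> Wset A then 1 else 0) + (if (i,j) \<in> Wset B then 1 else 0) =
           (if (i,j) \<in> Wset ?C then 1 else 0) + (if (i,j) \<in> Wset ?D then (1::nat) else 0)" for i j
  proof (cases "i \<in> {1..r} \<and> j \<in> {1..s}")
    case False
    then show ?thesis unfolding Wset_def by auto
  next
    case True
    let ?x = "fst (a i j)" and ?y = "snd (a i j)"
    have "a i j \<notin> PP" using corner_notin True by blast
    then have nc: "\<not> (fst A \<le> ?x \<and> ?x < fst B \<and> snd A \<le> ?y \<and> ?y < snd B)"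
      using cells unfolding cell_in_def by force
    have "\<And>v. v \<in> VV \<Longrightarrow> (i,j) \<in> Wset v \<longleftrightarrow> fst v \<le> ?x \<and> snd v \<le> ?y"
      using True unfolding Wset_def Fset_def by auto
    then show ?thesis using V nc lt by auto
  qed
  show ?thesis
  proof (rule poly_mapping_eqI)
    fix t show "Poly_Mapping.lookup (img A + img B) t = Poly_Mapping.lookup (img ?C + img ?D) t"
    proof (cases t)
      case (Th I) then show ?thesis using hAD hBC by (simp add: lookup_add lookup_img_Th)
    next
      case (Tv I) then show ?thesis using vAC vBD by (simp add: lookup_add lookup_img_Tv)
    next
      case (Tw i j) then show ?thesis using W[of i j] by (simp add: lookup_add lookup_img_Tw)
    qed
  qed
qed

lemma inner_rel:
  assumes "inner_interval PP A B"
  shows "rel TYPE('k::comm_ring_1) {#A, B#} {#(fst A, snd B), (fst B, snd A)#}"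
proof -
  have m: "(mon {#p, q#} :: (pt,'k) mpoly) = Var p * Var q" for p q
    unfolding mon_def Var_def by (simp add: mult_single expo_add_mset expo_single)
  have "(Var A * Var B - Var (fst A, snd B) * Var (fst B, snd A) :: (pt,'k) mpoly) \<in> GG"
    unfolding GG_def using assms by blast
  then have "(Var A * Var B - Var (fst A, snd B) * Var (fst B, snd A) :: (pt,'k) mpoly) \<in> polyomino_ideal PP"
    unfolding IP_eq by (rule ideal_gen_gen) simp
  then show ?thesis unfolding rel_def m .
qed

definition rectok :: "pt \<Rightarrow> pt \<Rightarrow> bool" where
  "rectok p q \<longleftrightarrow> (\<forall>c. min (fst p) (fst q) \<le> fst c \<and> fst c < max (fst p) (fst q) \<and>
                        min (snd p) (snd q) \<le> snd c \<and> snd c < max (snd p) (snd q) \<longrightarrow> c \<in> PP)"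

lemma swap:
  assumes "fst p \<noteq> fst q" "snd p \<noteq> snd q" "rectok p q"
  shows "(fst p, snd q) \<in> VV \<and> (fst q, snd p) \<in> VV \<and> p \<in> VV \<and> q \<in> VV \<and>
         img p + img q = img (fst p, snd q) + img (fst q, snd p) \<and>
         rel TYPE('k::comm_ring_1) {#p, q#} {#(fst p, snd q), (fst q, snd p)#}"
proof -
  let ?A = "(min (fst p) (fst q), min (snd p) (snd q))" and ?B = "(max (fst p) (fst q), max (snd p) (snd q))"
  have inn: "inner_interval PP ?A ?B"
    unfolding inner_interval_def
  proof (intro conjI allI impI)
    show "fst ?A < fst ?B" "snd ?A < snd ?B" using assms(1,2) by auto
    fix c assume "cell_in c ?A ?B"
    then have "min (fst p) (fst q) \<le> fst c \<and> fst c < max (fst p) (fst q) \<and>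
                        min (snd p) (snd q) \<le> snd c \<and> snd c < max (snd p) (snd q)"
      unfolding cell_in_def by simp
    then show "c \<in> PP" using assms(3) unfolding rectok_def by blast
  qed
  note V = inner_verts[OF inn] and I = inner_img[OF inn] and R = inner_rel[OF inn, where 'k='k]
  obtain x1 y1 x2 y2 where pq: "p = (x1, y1)" "q = (x2, y2)" by (cases p, cases q)
  have ne: "x1 \<noteq> x2" "y1 \<noteq> y2" using assms pq by auto
  consider "x1 < x2" "y1 < y2" | "x1 < x2" "y2 < y1" | "x2 < x1" "y1 < y2" | "x2 < x1" "y2 < y1"
    using ne by linarith
  then show ?thesis
  proof cases
    case 1
    then show ?thesis using V I R pq by simp
  next
    case 2
    then have "rel TYPE('k) {#(x1, y2), (x2, y1)#} {#p, q#}" using R pq by simp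
    then show ?thesis using V I pq 2 rel_sym by (simp add: add.commute)
  next
    case 3
    then have "rel TYPE('k) {#(x2, y1), (x1, y2)#} {#(x2, y2), (x1, y1)#}" using R pq by simp
    then have "rel TYPE('k) {#(x1, y2), (x2, y1)#} {#p, q#}" using pq by (simp add: add_mset_commute)
    then show ?thesis using V I pq 3 rel_sym by (simp add: add.commute)
  next
    case 4
    then have "rel TYPE('k) {#(x2, y2), (x1, y1)#} {#(x2, y1), (x1, y2)#}" using R pq by simp
    then show ?thesis using V I pq 4 by (simp add: add_mset_commute add.commute)
  qed
qed

end


lemma two_elems:
  assumes "p \<in># U" "q \<in># U" "p \<noteq> q"
  shows "\<exists>W. U = add_mset p (add_mset q W)"
proof -
  have "q \<in># U - {#p#}" using assms by (simp add: in_diff_count)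
  then have "U - {#p#} = add_mset q (U - {#p#} - {#q#})" by (rule insert_DiffM[symmetric])
  moreover have "U = add_mset p (U - {#p#})" using assms(1) by simp
  ultimately show ?thesis by metis
qed

lemma size_filter_zero: "size (filter_mset Q U) = 0 \<longleftrightarrow> (\<forall>x\<in>#U. \<not> Q x)"
  by (simp only: size_eq_0_iff_empty filter_mset_eq_mempty_iff) blast

lemma size_filter_pos: "x \<in># U \<Longrightarrow> Q x \<Longrightarrow> 0 < size (filter_mset Q U)"
  using size_filter_zero[of Q U] by (metis neq0_conv)

context gp
begin

definition hrow :: "pt \<Rightarrow> bool" where
  "hrow v \<longleftrightarrow> (\<exists>i\<in>{1..r}. \<exists>j\<in>{1..s}. snd (a i j) < snd v \<and> snd v < snd (b i j))"

definition hcol :: "pt \<Rightarrow> bool" where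
  "hcol v \<longleftrightarrow> (\<exists>i\<in>{1..r}. \<exists>j\<in>{1..s}. fst (a i j) < fst v \<and> fst v < fst (b i j))"

definition colfree :: "nat \<Rightarrow> nat \<Rightarrow> bool" where
  "colfree x x' \<longleftrightarrow> (\<forall>t. min x x' \<le> t \<and> t < max x x' \<longrightarrow>
     (\<forall>i\<in>{1..r}. \<forall>j\<in>{1..s}. \<not> (fst (a i j) \<le> t \<and> t + 1 \<le> fst (b i j))))"

definition rowfree :: "nat \<Rightarrow> nat \<Rightarrow> bool" where
  "rowfree y y' \<longleftrightarrow> (\<forall>t. min y y' \<le> t \<and> t < max y y' \<longrightarrow>
     (\<forall>i\<in>{1..r}. \<forall>j\<in>{1..s}. \<not> (snd (a i j) \<le> t \<and> t + 1 \<le> snd (b i j))))"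

lemma colfree_sym: "colfree x x' = colfree x' x"
  unfolding colfree_def by (simp add: min.commute max.commute)

lemma rowfree_sym: "rowfree x x' = rowfree x' x"
  unfolding rowfree_def by (simp add: min.commute max.commute)

lemma rect_col:
  assumes "p \<in> VV" "q \<in> VV" "colfree (fst p) (fst q)"
  shows "rectok p q"
  unfolding rectok_def
proof (intro allI impI)
  fix c assume c: "min (fst p) (fst q) \<le> fst c \<and> fst c < max (fst p) (fst q) \<and>
                   min (snd p) (snd q) \<le> snd c \<and> snd c < max (snd p) (snd q)"
  note bp = vert_bounds[OF assms(1)] and bq = vert_bounds[OF assms(2)]
  have b: "1 \<le> fst c" "fst c + 1 \<le> m" "1 \<le> snd c" "snd c + 1 \<le> n"
    using c bp bq by auto
  have "\<not> (\<exists>i\<in>{1..r}. \<exists>j\<in>{1..s}. cell_in c (a i j) (b i j))"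
    using assms(3) c unfolding colfree_def cell_in_def by blast
  then show "c \<in> PP" using b unfolding cell_P by blast
qed

lemma rect_row:
  assumes "p \<in> VV" "q \<in> VV" "rowfree (snd p) (snd q)"
  shows "rectok p q"
  unfolding rectok_def
proof (intro allI impI)
  fix c assume c: "min (fst p) (fst q) \<le> fst c \<and> fst c < max (fst p) (fst q) \<and>
                   min (snd p) (snd q) \<le> snd c \<and> snd c < max (snd p) (snd q)"
  note bp = vert_bounds[OF assms(1)] and bq = vert_bounds[OF assms(2)]
  have b: "1 \<le> fst c" "fst c + 1 \<le> m" "1 \<le> snd c" "snd c + 1 \<le> n"
    using c bp bq by auto
  have "\<not> (\<exists>i\<in>{1..r}. \<exists>j\<in>{1..s}. cell_in c (a i j) (b i j))"
    using assms(3) c unfolding rowfree_def cell_in_def by blast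
  then show "c \<in> PP" using b unfolding cell_P by blast
qed

definition good :: "('k::comm_ring_1) itself \<Rightarrow> pt multiset \<Rightarrow> pt \<Rightarrow> bool" where
  "good (_::'k itself) U u \<longleftrightarrow>
     (\<exists>U1. rel TYPE('k) U U1 \<and> Ee U1 = Ee U \<and> set_mset U1 \<subseteq> VV \<and> u \<in># U1)"

lemma good_triv: "set_mset U \<subseteq> VV \<Longrightarrow> u \<in># U \<Longrightarrow> good TYPE('k::comm_ring_1) U u"
  unfolding good_def using rel_refl by blast

lemma good_trans:
  assumes "rel TYPE('k::comm_ring_1) U U2" "Ee U2 = Ee U" "good TYPE('k) U2 u"
  shows "good TYPE('k) U u"
  using assms rel_trans unfolding good_def by metis

lemma swapU:
  assumes "set_mset U \<subseteq> VV" "U = add_mset p (add_mset q W)"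
    "fst p \<noteq> fst q" "snd p \<noteq> snd q" "rectok p q"
  shows "rel TYPE('k::comm_ring_1) U (add_mset (fst p, snd q) (add_mset (fst q, snd p) W)) \<and>
         Ee (add_mset (fst p, snd q) (add_mset (fst q, snd p) W)) = Ee U \<and>
         set_mset (add_mset (fst p, snd q) (add_mset (fst q, snd p) W)) \<subseteq> VV"
proof -
  note S = swap[OF assms(3,4,5), where 'k='k]
  have W: "set_mset W \<subseteq> VV" using assms(1,2) by auto
  have "rel TYPE('k) ({#p, q#} + W) ({#(fst p, snd q), (fst q, snd p)#} + W)"
    using rel_add[OF _ W] S by blast
  moreover have "Ee (add_mset (fst p, snd q) (add_mset (fst q, snd p) W)) = Ee U"
  proof -
    have e: "img p + img q = img (fst p, snd q) + img (fst q, snd p)" using S by blast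
    have "Ee (add_mset (fst p, snd q) (add_mset (fst q, snd p) W)) = (img (fst p, snd q) + img (fst q, snd p)) + Ee W"
      by (simp add: add.assoc)
    also have "\<dots> = (img p + img q) + Ee W" using e by simp
    also have "\<dots> = Ee U" using assms(2) by (simp add: add.assoc)
    finally show ?thesis .
  qed
  ultimately show ?thesis using assms(2) S W by simp
qed

lemma Sx:
  assumes U: "set_mset U \<subseteq> VV" and pq: "p \<in># U" "q \<in># U" "p \<noteq> q"
    and r: "snd p = snd u" "fst q = fst u" "colfree (fst p) (fst u)"
  shows "good TYPE('k::comm_ring_1) U u"
proof (cases "p = u \<or> q = u")
  case True
  then show ?thesis using good_triv[OF U] pq by blast
next
  case False
  then have ne: "fst p \<noteq> fst q" "snd p \<noteq> snd q" using r by (auto simp: prod_eq_iff)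
  obtain W where W: "U = add_mset p (add_mset q W)" using two_elems[OF pq] by blast
  have pqV: "p \<in> VV" "q \<in> VV" using U pq by auto
  have "rectok p q" by (rule rect_col[OF pqV]) (use r in simp)
  note S = swapU[OF U W ne this, where 'k='k]
  have "(fst q, snd p) = u" using r by (simp add: prod_eq_iff)
  then show ?thesis unfolding good_def
    by (intro exI[of _ "add_mset (fst p, snd q) (add_mset (fst q, snd p) W)"]) (use S in auto)
qed

lemma Sy:
  assumes U: "set_mset U \<subseteq> VV" and pq: "p \<in># U" "q \<in># U" "p \<noteq> q"
    and r: "snd p = snd u" "fst q = fst u" "rowfree (snd q) (snd u)"
  shows "good TYPE('k::comm_ring_1) U u"
proof (cases "p = u \<or> q = u")
  case True
  then show ?thesis using good_triv[OF U] pq by blast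
next
  case False
  then have ne: "fst p \<noteq> fst q" "snd p \<noteq> snd q" using r by (auto simp: prod_eq_iff)
  obtain W where W: "U = add_mset p (add_mset q W)" using two_elems[OF pq] by blast
  have "rowfree (snd p) (snd q)" using r rowfree_sym by simp
  moreover have pqV: "p \<in> VV" "q \<in> VV" using U pq by auto
  ultimately have "rectok p q" using rect_row by blast
  note S = swapU[OF U W ne this, where 'k='k]
  have "(fst q, snd p) = u" using r by (simp add: prod_eq_iff)
  then show ?thesis unfolding good_def
    by (intro exI[of _ "add_mset (fst p, snd q) (add_mset (fst q, snd p) W)"]) (use S in auto)
qed

lemma case_hrow:
  assumes U: "set_mset U \<subseteq> VV" and u: "u \<in> VV" "hrow u"
    and p: "p \<in># U" "Hint PP p = Hint PP u" and q: "q \<in># U" "Vint PP q = Vint PP u"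
  shows "good TYPE('k::comm_ring_1) U u"
proof -
  have pV: "p \<in> VV" "q \<in> VV" using U p q by auto
  note Hp = Hint_same[OF u(1) pV(1) p(2)] and Vq = Vint_same[OF u(1) pV(2) q(2)]
  obtain i0 j0 where ij0: "i0 \<in> {1..r}" "j0 \<in> {1..s}" "snd (a i0 j0) < snd u" "snd u < snd (b i0 j0)"
    using u(2) unfolding hrow_def by blast
  have cf: "colfree (fst p) (fst u)"
    unfolding colfree_def
  proof (intro allI impI ballI notI)
    fix t i j assume t: "min (fst p) (fst u) \<le> t \<and> t < max (fst p) (fst u)"
      and ij: "i \<in> {1..r}" "j \<in> {1..s}" and h: "fst (a i j) \<le> t \<and> t + 1 \<le> fst (b i j)"
    have e: "h_edge PP (t, snd u)" using Hp t by (simp add: min.commute max.commute)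
    have c1: "fst (a i j0) = fst (a i j)" "fst (b i j0) = fst (b i j)" using gd_col[OF ij(1) ij0(2) ij(2)] by auto
    have c2: "snd (a i j0) = snd (a i0 j0)" "snd (b i j0) = snd (b i0 j0)" using gd_row[OF ij0(2) ij(1) ij0(1)] by auto
    have "cell_in (t, snd u) (a i j0) (b i j0)" unfolding cell_in_def using c1 c2 h ij0 by auto
    then have n1: "(t, snd u) \<notin> PP" using hole_notin[OF ij(1) ij0(2)] by blast
    have "cell_in (t, snd u - 1) (a i j0) (b i j0)" unfolding cell_in_def using c1 c2 h ij0 by auto
    then have n2: "(t, snd u - 1) \<notin> PP" using hole_notin[OF ij(1) ij0(2)] by blast
    show False using e n1 n2 unfolding h_edge_def by simp
  qed
  show ?thesis
  proof (cases "p = q")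
    case True
    then have "p = u" using Hp Vq by (simp add: prod_eq_iff)
    then show ?thesis using good_triv[OF U] p by blast
  next
    case False
    show ?thesis by (rule Sx[OF U p(1) q(1) False]) (use Hp Vq cf in auto)
  qed
qed

lemma case_hcol:
  assumes U: "set_mset U \<subseteq> VV" and u: "u \<in> VV" "hcol u"
    and p: "p \<in># U" "Hint PP p = Hint PP u" and q: "q \<in># U" "Vint PP q = Vint PP u"
  shows "good TYPE('k::comm_ring_1) U u"
proof -
  have pV: "p \<in> VV" "q \<in> VV" using U p q by auto
  note Hp = Hint_same[OF u(1) pV(1) p(2)] and Vq = Vint_same[OF u(1) pV(2) q(2)]
  obtain i0 j0 where ij0: "i0 \<in> {1..r}" "j0 \<in> {1..s}" "fst (a i0 j0) < fst u" "fst u < fst (b i0 j0)"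
    using u(2) unfolding hcol_def by blast
  have cf: "rowfree (snd q) (snd u)"
    unfolding rowfree_def
  proof (intro allI impI ballI notI)
    fix t i j assume t: "min (snd q) (snd u) \<le> t \<and> t < max (snd q) (snd u)"
      and ij: "i \<in> {1..r}" "j \<in> {1..s}" and h: "snd (a i j) \<le> t \<and> t + 1 \<le> snd (b i j)"
    have e: "v_edge PP (fst u, t)" using Vq t by (simp add: min.commute max.commute)
    have c1: "snd (a i0 j) = snd (a i j)" "snd (b i0 j) = snd (b i j)" using gd_row[OF ij(2) ij0(1) ij(1)] by auto
    have c2: "fst (a i0 j) = fst (a i0 j0)" "fst (b i0 j) = fst (b i0 j0)" using gd_col[OF ij0(1) ij(2) ij0(2)] by auto
    have "cell_in (fst u, t) (a i0 j) (b i0 j)" unfolding cell_in_def using c1 c2 h ij0 by auto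
    then have n1: "(fst u, t) \<notin> PP" using hole_notin[OF ij0(1) ij(2)] by blast
    have "cell_in (fst u - 1, t) (a i0 j) (b i0 j)" unfolding cell_in_def using c1 c2 h ij0 by auto
    then have n2: "(fst u - 1, t) \<notin> PP" using hole_notin[OF ij0(1) ij(2)] by blast
    show False using e n1 n2 unfolding v_edge_def by simp
  qed
  show ?thesis
  proof (cases "p = q")
    case True
    then have "p = u" using Hp Vq by (simp add: prod_eq_iff)
    then show ?thesis using good_triv[OF U] p by blast
  next
    case False
    show ?thesis by (rule Sy[OF U p(1) q(1) False]) (use Hp Vq cf in auto)
  qed
qed

lemma case_z:
  assumes U: "set_mset U \<subseteq> VV" and z: "z \<in># U" "colfree (fst z) (fst u)" "rowfree (snd z) (snd u)"
    and p: "p \<in># U" "snd p = snd u" and q: "q \<in># U" "fst q = fst u"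
  shows "good TYPE('k::comm_ring_1) U u"
proof (cases "u \<in># U")
  case True
  then show ?thesis using good_triv[OF U] by blast
next
  case uU: False
  have zu: "z \<noteq> u" "p \<noteq> u" "q \<noteq> u" using uU z p q by auto
  show ?thesis
  proof (cases "snd z = snd u")
    case True
    have "z \<noteq> q" using zu True q(2) by (auto simp: prod_eq_iff)
    show ?thesis by (rule Sx[OF U z(1) q(1) \<open>z \<noteq> q\<close> True q(2) z(2)])
  next
    case zy: False
    show ?thesis
    proof (cases "fst z = fst u")
      case True
      have "p \<noteq> z" using zy p(2) by auto
      show ?thesis by (rule Sy[OF U p(1) z(1) \<open>p \<noteq> z\<close> p(2) True z(3)])
    next
      case zx: False
      have pz: "p \<noteq> z" using zy p(2) by auto
      show ?thesis
      proof (cases "fst p = fst z")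
        case True
        have "p \<noteq> q" using True zx q(2) by auto
        show ?thesis by (rule Sx[OF U p(1) q(1) \<open>p \<noteq> q\<close> p(2) q(2)]) (use True z(2) in simp)
      next
        case pzx: False
        have qz: "q \<noteq> z" using zx q(2) by auto
        have qp: "q \<noteq> p"
        proof
          assume "q = p" then have "p = u" using p(2) q(2) by (simp add: prod_eq_iff)
          then show False using zu by simp
        qed
        obtain W where W: "U = add_mset z (add_mset p W)" using two_elems[OF z(1) p(1) pz[symmetric]] by blast
        have qW: "q \<in># W" using q(1) qz qp W by auto
        have zpV: "z \<in> VV" "p \<in> VV" using U z(1) p(1) by auto
        have "rowfree (snd z) (snd p)" using z(3) p(2) by simp
        then have rz: "rectok z p" using rect_row zpV by blast
        have ne: "fst z \<noteq> fst p" "snd z \<noteq> snd p" using pzx zy p(2) by auto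
        note S = swapU[OF U W ne rz, where 'k='k]
        let ?U2 = "add_mset (fst z, snd p) (add_mset (fst p, snd z) W)"
        have g2: "good TYPE('k) ?U2 u"
        proof (rule Sx[of ?U2 "(fst z, snd p)" q])
          show "set_mset ?U2 \<subseteq> VV" using S by blast
          show "(fst z, snd p) \<in># ?U2" by simp
          show "q \<in># ?U2" using qW by simp
          show "(fst z, snd p) \<noteq> q" using zx q(2) by auto
          show "snd (fst z, snd p) = snd u" using p(2) by simp
          show "fst q = fst u" using q(2) .
          show "colfree (fst (fst z, snd p)) (fst u)" using z(2) by simp
        qed
        show ?thesis by (rule good_trans[OF _ _ g2]) (use S in auto)
      qed
    qed
  qed
qed

end


context gp
begin

definition Xc :: "nat set" where
  "Xc = {fst (a i j) | i j. i \<in> {1..r} \<and> j \<in> {1..s}} \<union> {m}"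

definition Yc :: "nat set" where
  "Yc = {snd (a i j) | i j. i \<in> {1..r} \<and> j \<in> {1..s}} \<union> {n}"

definition Ax :: "nat \<Rightarrow> nat" where "Ax x = Min {x0 \<in> Xc. x \<le> x0}"
definition Cy :: "nat \<Rightarrow> nat" where "Cy y = Min {y0 \<in> Yc. y \<le> y0}"

definition Qc :: "nat \<Rightarrow> nat \<Rightarrow> pt multiset \<Rightarrow> nat" where
  "Qc x0 y0 U = size (filter_mset (\<lambda>v. fst v \<le> x0 \<and> snd v \<le> y0) U)"

lemma finite_Xc: "finite Xc"
proof -
  have "Xc \<subseteq> (\<lambda>ij. fst (a (fst ij) (snd ij))) ` ({1..r} \<times> {1..s}) \<union> {m}"
    unfolding Xc_def by force
  then show ?thesis by (rule finite_subset) simp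
qed

lemma finite_Yc: "finite Yc"
proof -
  have "Yc \<subseteq> (\<lambda>ij. snd (a (fst ij) (snd ij))) ` ({1..r} \<times> {1..s}) \<union> {n}"
    unfolding Yc_def by force
  then show ?thesis by (rule finite_subset) simp
qed

lemma Ax_props:
  assumes "x \<le> m"
  shows "Ax x \<in> Xc" "x \<le> Ax x" "\<And>x0. x0 \<in> Xc \<Longrightarrow> x \<le> x0 \<Longrightarrow> Ax x \<le> x0"
proof -
  have fin: "finite {x0 \<in> Xc. x \<le> x0}" using finite_Xc by simp
  have ne: "m \<in> {x0 \<in> Xc. x \<le> x0}" using assms unfolding Xc_def by simp
  have "Ax x \<in> {x0 \<in> Xc. x \<le> x0}" unfolding Ax_def using Min_in[OF fin] ne by blast
  then show "Ax x \<in> Xc" "x \<le> Ax x" by auto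
  fix x0 assume "x0 \<in> Xc" "x \<le> x0"
  then show "Ax x \<le> x0" unfolding Ax_def using Min_le[OF fin] by simp
qed

lemma Cy_props:
  assumes "y \<le> n"
  shows "Cy y \<in> Yc" "y \<le> Cy y" "\<And>y0. y0 \<in> Yc \<Longrightarrow> y \<le> y0 \<Longrightarrow> Cy y \<le> y0"
proof -
  have fin: "finite {y0 \<in> Yc. y \<le> y0}" using finite_Yc by simp
  have ne: "n \<in> {y0 \<in> Yc. y \<le> y0}" using assms unfolding Yc_def by simp
  have "Cy y \<in> {y0 \<in> Yc. y \<le> y0}" unfolding Cy_def using Min_in[OF fin] ne by blast
  then show "Cy y \<in> Yc" "y \<le> Cy y" by auto
  fix y0 assume "y0 \<in> Yc" "y \<le> y0"
  then show "Cy y \<le> y0" unfolding Cy_def using Min_le[OF fin] by simp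
qed

lemma size_filter_congV:
  assumes "set_mset U \<subseteq> VV" "\<And>v. v \<in> VV \<Longrightarrow> Q1 v = Q2 v"
  shows "size (filter_mset Q1 U) = size (filter_mset Q2 U)"
proof -
  have "filter_mset Q1 U = filter_mset Q2 U"
    by (rule filter_mset_cong0) (use assms in auto)
  then show ?thesis by simp
qed

lemma Ee_size:
  assumes "Ee U = Ee U'" shows "size U = size U'"
proof -
  have "size (filter_mset (\<lambda>v. (\<lambda>_. True) (Hint PP v)) U) = size (filter_mset (\<lambda>v. (\<lambda>_. True) (Hint PP v)) U')"
    by (rule inv_HG[OF assms])
  then show ?thesis by simp
qed

lemma Qinv:
  assumes E: "Ee U = Ee U'" and U: "set_mset U \<subseteq> VV" "set_mset U' \<subseteq> VV"
    and x0: "x0 \<in> Xc" and y0: "y0 \<in> Yc"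
  shows "Qc x0 y0 U = Qc x0 y0 U'"
proof -
  have viaH: "Qc x0 y0 U = Qc x0 y0 U'" if G: "\<And>v. v \<in> VV \<Longrightarrow> (fst v \<le> x0 \<and> snd v \<le> y0) = G (Hint PP v)" for G
  proof -
    have "Qc x0 y0 U = size (filter_mset (\<lambda>v. G (Hint PP v)) U)"
      unfolding Qc_def by (rule size_filter_congV[OF U(1)]) (rule G)
    also have "\<dots> = size (filter_mset (\<lambda>v. G (Hint PP v)) U')" by (rule inv_HG[OF E])
    also have "\<dots> = Qc x0 y0 U'"
      unfolding Qc_def by (rule size_filter_congV[OF U(2)]) (rule G[symmetric])
    finally show ?thesis .
  qed
  have viaV: "Qc x0 y0 U = Qc x0 y0 U'" if G: "\<And>v. v \<in> VV \<Longrightarrow> (fst v \<le> x0 \<and> snd v \<le> y0) = G (Vint PP v)" for G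
  proof -
    have "Qc x0 y0 U = size (filter_mset (\<lambda>v. G (Vint PP v)) U)"
      unfolding Qc_def by (rule size_filter_congV[OF U(1)]) (rule G)
    also have "\<dots> = size (filter_mset (\<lambda>v. G (Vint PP v)) U')" by (rule inv_VG[OF E])
    also have "\<dots> = Qc x0 y0 U'"
      unfolding Qc_def by (rule size_filter_congV[OF U(2)]) (rule G[symmetric])
    finally show ?thesis .
  qed
  have x0': "x0 = m \<or> (\<exists>i j. i \<in> {1..r} \<and> j \<in> {1..s} \<and> x0 = fst (a i j))" using x0 unfolding Xc_def by auto
  have y0': "y0 = n \<or> (\<exists>i j. i \<in> {1..r} \<and> j \<in> {1..s} \<and> y0 = snd (a i j))" using y0 unfolding Yc_def by auto
  consider "x0 = m" | i j where "i \<in> {1..r}" "j \<in> {1..s}" "x0 = fst (a i j)" using x0' by blast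
  then show ?thesis
  proof cases
    case 1
    consider "y0 = n" | i j where "i \<in> {1..r}" "j \<in> {1..s}" "y0 = snd (a i j)" using y0' by blast
    then show ?thesis
    proof cases
      case 1
      show ?thesis
      proof (rule viaH[of "\<lambda>_. True"])
        fix v assume v: "v \<in> VV"
        show "(fst v \<le> x0 \<and> snd v \<le> y0) = True"
          using vert_bounds(2,4)[OF v] \<open>x0 = m\<close> 1 by simp
      qed
    next
      case 2
      show ?thesis
      proof (rule viaH[of "\<lambda>I. \<forall>w\<in>I. snd w \<le> y0"])
        fix v assume v: "v \<in> VV"
        have "(\<forall>w\<in>Hint PP v. snd w \<le> y0) \<longleftrightarrow> snd v \<le> y0"
        proof
          assume "\<forall>w\<in>Hint PP v. snd w \<le> y0"
          then show "snd v \<le> y0" using Hint_prop[OF v] by blast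
        next
          assume h: "snd v \<le> y0"
          show "\<forall>w\<in>Hint PP v. snd w \<le> y0"
          proof
            fix w assume "w \<in> Hint PP v"
            then have "snd w = snd v" using Hint_row[OF v] by blast
            then show "snd w \<le> y0" using h by simp
          qed
        qed
        then show "(fst v \<le> x0 \<and> snd v \<le> y0) = (\<forall>w\<in>Hint PP v. snd w \<le> y0)"
          using vert_bounds[OF v] \<open>x0 = m\<close> by auto
      qed
    qed
  next
    case (2 i j)
    consider "y0 = n" | i' j' where "i' \<in> {1..r}" "j' \<in> {1..s}" "y0 = snd (a i' j')" using y0' by blast
    then show ?thesis
    proof cases
      case 1
      show ?thesis
      proof (rule viaV[of "\<lambda>I. \<forall>w\<in>I. fst w \<le> x0"])
        fix v assume v: "v \<in> VV"
        have "(\<forall>w\<in>Vint PP v. fst w \<le> x0) \<longleftrightarrow> fst v \<le> x0"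
        proof
          assume "\<forall>w\<in>Vint PP v. fst w \<le> x0"
          then show "fst v \<le> x0" using Vint_prop[OF v] by blast
        next
          assume h: "fst v \<le> x0"
          show "\<forall>w\<in>Vint PP v. fst w \<le> x0"
          proof
            fix w assume "w \<in> Vint PP v"
            then have "fst w = fst v" using Vint_col[OF v] by blast
            then show "fst w \<le> x0" using h by simp
          qed
        qed
        then show "(fst v \<le> x0 \<and> snd v \<le> y0) = (\<forall>w\<in>Vint PP v. fst w \<le> x0)"
          using vert_bounds[OF v] \<open>y0 = n\<close> by auto
      qed
    next
      case (2 i' j')
      have eq: "fst (a i j') = x0" "snd (a i j') = y0"
        using gd_col[OF \<open>i \<in> {1..r}\<close> \<open>j \<in> {1..s}\<close> \<open>j' \<in> {1..s}\<close>] gd_row[OF \<open>j' \<in> {1..s}\<close> \<open>i \<in> {1..r}\<close> \<open>i' \<in> {1..r}\<close>]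
          \<open>x0 = fst (a i j)\<close> \<open>y0 = snd (a i' j')\<close> by auto
      have F: "\<And>v. v \<in> VV \<Longrightarrow> (fst v \<le> x0 \<and> snd v \<le> y0) = (v \<in> Fset PP a i j')"
        using Fset_iff eq by simp
      have "Qc x0 y0 U = size (filter_mset (\<lambda>v. v \<in> Fset PP a i j') U)"
        unfolding Qc_def by (rule size_filter_congV[OF U(1)]) (rule F)
      also have "\<dots> = size (filter_mset (\<lambda>v. v \<in> Fset PP a i j') U')"
        by (rule inv_W[OF E \<open>i \<in> {1..r}\<close> \<open>j' \<in> {1..s}\<close>])
      also have "\<dots> = Qc x0 y0 U'"
        unfolding Qc_def by (rule size_filter_congV[OF U(2)]) (rule F[symmetric])
      finally show ?thesis .
    qed
  qed
qed

lemma size_filter_ex: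
  assumes "0 < size (filter_mset Q U)" shows "\<exists>x\<in>#U. Q x"
proof (rule ccontr)
  assume "\<not> (\<exists>x\<in>#U. Q x)"
  then have "size (filter_mset Q U) = 0" unfolding size_filter_zero by blast
  with assms show False by simp
qed

lemma select:
  assumes "U' \<noteq> {#}" "set_mset U' \<subseteq> VV"
  shows "\<exists>u. u \<in># U' \<and> (\<forall>v\<in>#U'. Ax (fst u) \<le> Ax (fst v)) \<and>
             (\<forall>v\<in>#U'. Ax (fst v) = Ax (fst u) \<longrightarrow> snd u \<le> snd v)"
proof -
  obtain x where x: "x \<in># U'" using assms(1) by fastforce
  define f where "f v = Ax (fst v) * (n + 1) + snd v" for v
  obtain u where u: "u \<in># U'" "\<forall>v. v \<in># U' \<longrightarrow> f u \<le> f v"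
    using ex_has_least_nat[of "\<lambda>v. v \<in># U'" x f] x by blast
  have sn: "\<And>v. v \<in># U' \<Longrightarrow> snd v \<le> n" using assms(2) vert_bounds by blast
  have L1: "\<forall>v\<in>#U'. Ax (fst u) \<le> Ax (fst v)"
  proof (intro ballI, rule ccontr)
    fix v assume v: "v \<in># U'" and "\<not> Ax (fst u) \<le> Ax (fst v)"
    then have "Ax (fst v) + 1 \<le> Ax (fst u)" by simp
    then have m1: "(Ax (fst v) + 1) * (n + 1) \<le> Ax (fst u) * (n + 1)" by (rule mult_le_mono1)
    have "f v < (Ax (fst v) + 1) * (n + 1)" unfolding f_def using sn[OF v] by simp
    also have "\<dots> \<le> f u" using m1 unfolding f_def by simp
    finally have "f v < f u" .
    moreover have "f u \<le> f v" using u(2) v by blast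
    ultimately show False by simp
  qed
  have L2: "\<forall>v\<in>#U'. Ax (fst v) = Ax (fst u) \<longrightarrow> snd u \<le> snd v"
  proof (intro ballI impI)
    fix v assume v: "v \<in># U'" and e: "Ax (fst v) = Ax (fst u)"
    have "f u \<le> f v" using u(2) v by blast
    then show "snd u \<le> snd v" unfolding f_def using e by simp
  qed
  show ?thesis using u(1) L1 L2 by blast
qed

lemma zexists:
  assumes E: "Ee U = Ee U'" and U: "set_mset U \<subseteq> VV" "set_mset U' \<subseteq> VV"
    and u: "u \<in># U'" "\<forall>v\<in>#U'. Ax (fst u) \<le> Ax (fst v)" "\<forall>v\<in>#U'. Ax (fst v) = Ax (fst u) \<longrightarrow> snd u \<le> snd v"
    and cr: "\<forall>v\<in>#U. \<not> hcol v \<and> \<not> hrow v" "\<not> hcol u" "\<not> hrow u"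
  shows "\<exists>z\<in>#U. colfree (fst z) (fst u) \<and> rowfree (snd z) (snd u)"
proof -
  have uV: "u \<in> VV" using u(1) U(2) by auto
  define a0 where "a0 = Ax (fst u)"
  define c0 where "c0 = Cy (snd u)"
  note AP = Ax_props[OF vert_bounds(2)[OF uV]] and CP = Cy_props[OF vert_bounds(4)[OF uV]]
  have a0X: "a0 \<in> Xc" and c0Y: "c0 \<in> Yc" using AP CP unfolding a0_def c0_def by auto
  have ua: "fst u \<le> a0" "snd u \<le> c0" using AP CP unfolding a0_def c0_def by auto
  have "0 < Qc a0 c0 U'" unfolding Qc_def by (rule size_filter_pos[OF u(1)]) (use ua in simp)
  then have "0 < Qc a0 c0 U" using Qinv[OF E U a0X c0Y] by simp
  then have "\<exists>z\<in>#U. fst z \<le> a0 \<and> snd z \<le> c0"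
    unfolding Qc_def by (rule size_filter_ex)
  then obtain z where z: "z \<in># U" "fst z \<le> a0" "snd z \<le> c0" by blast
  have zV: "z \<in> VV" using z(1) U(1) by auto
  have zx: "x0 < fst z" if "x0 \<in> Xc" "x0 < fst u" for x0
  proof -
    have "Qc x0 c0 U' = 0"
      unfolding Qc_def size_filter_zero
    proof (intro ballI notI)
      fix v assume v: "v \<in># U'" and h: "fst v \<le> x0 \<and> snd v \<le> c0"
      have vV: "v \<in> VV" using v U(2) by auto
      have "Ax (fst v) \<le> x0" using Ax_props(3)[OF vert_bounds(2)[OF vV] that(1)] h by simp
      moreover have "Ax (fst u) \<le> Ax (fst v)" using u(2) v by blast
      ultimately show False using that(2) AP(2) by simp
    qed
    then have "Qc x0 c0 U = 0" using Qinv[OF E U that(1) c0Y] by simp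
    then have "\<not> (fst z \<le> x0 \<and> snd z \<le> c0)" using z(1) unfolding Qc_def size_filter_zero by blast
    then show ?thesis using z(3) by simp
  qed
  have zy: "y0 < snd z" if "y0 \<in> Yc" "y0 < snd u" for y0
  proof -
    have "Qc a0 y0 U' = 0"
      unfolding Qc_def size_filter_zero
    proof (intro ballI notI)
      fix v assume v: "v \<in># U'" and h: "fst v \<le> a0 \<and> snd v \<le> y0"
      have vV: "v \<in> VV" using v U(2) by auto
      have "Ax (fst v) \<le> a0" using Ax_props(3)[OF vert_bounds(2)[OF vV] a0X] h by simp
      moreover have "Ax (fst u) \<le> Ax (fst v)" using u(2) v by blast
      ultimately have "Ax (fst v) = Ax (fst u)" unfolding a0_def by simp
      then have "snd u \<le> snd v" using u(3) v by blast
      then show False using h that(2) by simp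
    qed
    then have "Qc a0 y0 U = 0" using Qinv[OF E U a0X that(1)] by simp
    then have "\<not> (fst z \<le> a0 \<and> snd z \<le> y0)" using z(1) unfolding Qc_def size_filter_zero by blast
    then show ?thesis using z(2) by simp
  qed
  have czu: "\<not> hcol z" "\<not> hrow z" using cr(1) z(1) by auto
  have cf: "colfree (fst z) (fst u)"
    unfolding colfree_def
  proof (intro allI impI ballI notI)
    fix t i j assume t: "min (fst z) (fst u) \<le> t \<and> t < max (fst z) (fst u)"
      and ij: "i \<in> {1..r}" "j \<in> {1..s}" and h: "fst (a i j) \<le> t \<and> t + 1 \<le> fst (b i j)"
    have x0: "fst (a i j) \<in> Xc" unfolding Xc_def using ij by blast
    show False
    proof (cases "fst z \<le> fst u")
      case True
      have "\<not> (fst (a i j) < fst z \<and> fst z < fst (b i j))" using czu(1) ij unfolding hcol_def by blast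
      then have "fst z \<le> fst (a i j)" using t h True by auto
      moreover have "fst (a i j) < fst z" by (rule zx[OF x0]) (use t h True in auto)
      ultimately show False by simp
    next
      case False
      have "\<not> (fst (a i j) < fst u \<and> fst u < fst (b i j))" using cr(2) ij unfolding hcol_def by blast
      then have "fst u \<le> fst (a i j)" using t h False by auto
      then have "a0 \<le> fst (a i j)" using AP(3)[OF x0] unfolding a0_def by simp
      then show False using z(2) t h False by auto
    qed
  qed
  have rf: "rowfree (snd z) (snd u)"
    unfolding rowfree_def
  proof (intro allI impI ballI notI)
    fix t i j assume t: "min (snd z) (snd u) \<le> t \<and> t < max (snd z) (snd u)"
      and ij: "i \<in> {1..r}" "j \<in> {1..s}" and h: "snd (a i j) \<le> t \<and> t + 1 \<le> snd (b i j)"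
    have y0: "snd (a i j) \<in> Yc" unfolding Yc_def using ij by blast
    show False
    proof (cases "snd z \<le> snd u")
      case True
      have "\<not> (snd (a i j) < snd z \<and> snd z < snd (b i j))" using czu(2) ij unfolding hrow_def by blast
      then have "snd z \<le> snd (a i j)" using t h True by auto
      moreover have "snd (a i j) < snd z" by (rule zy[OF y0]) (use t h True in auto)
      ultimately show False by simp
    next
      case False
      have "\<not> (snd (a i j) < snd u \<and> snd u < snd (b i j))" using cr(3) ij unfolding hrow_def by blast
      then have "snd u \<le> snd (a i j)" using t h False by auto
      then have "c0 \<le> snd (a i j)" using CP(3)[OF y0] unfolding c0_def by simp
      then show False using z(3) t h False by auto
    qed
  qed
  show ?thesis using z(1) cf rf by blast
qed

lemma oneside:
  assumes E: "Ee U = Ee U'" and U: "set_mset U \<subseteq> VV" "set_mset U' \<subseteq> VV" and u: "u \<in># U'"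
    and c: "hrow u \<or> hcol u \<or> (\<exists>z\<in>#U. colfree (fst z) (fst u) \<and> rowfree (snd z) (snd u))"
  shows "good TYPE('k::comm_ring_1) U u"
proof -
  have uV: "u \<in> VV" using u U(2) by auto
  have "0 < size (filter_mset (\<lambda>v. (\<lambda>I. I = Hint PP u) (Hint PP v)) U')"
    by (rule size_filter_pos[OF u]) simp
  moreover have "size (filter_mset (\<lambda>v. (\<lambda>I. I = Hint PP u) (Hint PP v)) U) =
     size (filter_mset (\<lambda>v. (\<lambda>I. I = Hint PP u) (Hint PP v)) U')" by (rule inv_HG[OF E])
  ultimately have "0 < size (filter_mset (\<lambda>v. (\<lambda>I. I = Hint PP u) (Hint PP v)) U)" by simp
  then have "\<exists>p\<in>#U. Hint PP p = Hint PP u"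
    by (rule size_filter_ex)
  then obtain p where p: "p \<in># U" "Hint PP p = Hint PP u" by blast
  have "0 < size (filter_mset (\<lambda>v. (\<lambda>I. I = Vint PP u) (Vint PP v)) U')"
    by (rule size_filter_pos[OF u]) simp
  moreover have "size (filter_mset (\<lambda>v. (\<lambda>I. I = Vint PP u) (Vint PP v)) U) =
     size (filter_mset (\<lambda>v. (\<lambda>I. I = Vint PP u) (Vint PP v)) U')" by (rule inv_VG[OF E])
  ultimately have "0 < size (filter_mset (\<lambda>v. (\<lambda>I. I = Vint PP u) (Vint PP v)) U)" by simp
  then have "\<exists>q\<in>#U. Vint PP q = Vint PP u"
    by (rule size_filter_ex)
  then obtain q where q: "q \<in># U" "Vint PP q = Vint PP u" by blast
  have pqV: "p \<in> VV" "q \<in> VV" using p q U(1) by auto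
  from c consider "hrow u" | "hcol u" | "\<exists>z\<in>#U. colfree (fst z) (fst u) \<and> rowfree (snd z) (snd u)" by blast
  then show ?thesis
  proof cases
    case 1 then show ?thesis using case_hrow[OF U(1) uV 1 p q] by simp
  next
    case 2 then show ?thesis using case_hcol[OF U(1) uV 2 p q] by simp
  next
    case 3
    then obtain z where z: "z \<in># U" "colfree (fst z) (fst u)" "rowfree (snd z) (snd u)" by blast
    have "snd p = snd u" using Hint_same[OF uV pqV(1) p(2)] by simp
    moreover have "fst q = fst u" using Vint_same[OF uV pqV(2) q(2)] by simp
    ultimately show ?thesis using case_z[OF U(1) z p(1) _ q(1)] by simp
  qed
qed

lemma key:
  assumes E: "Ee U = Ee U'" and U: "set_mset U \<subseteq> VV" "set_mset U' \<subseteq> VV" and ne: "U' \<noteq> {#}"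
  shows "\<exists>u U1 U1'. rel TYPE('k::comm_ring_1) U U1 \<and> rel TYPE('k) U' U1' \<and> Ee U1 = Ee U \<and> Ee U1' = Ee U' \<and>
     set_mset U1 \<subseteq> VV \<and> set_mset U1' \<subseteq> VV \<and> u \<in># U1 \<and> u \<in># U1'"
proof -
  consider (A) u where "u \<in># U'" "hrow u \<or> hcol u" | (B) u where "u \<in># U" "hrow u \<or> hcol u"
    | (C) "\<forall>v\<in>#U'. \<not> hcol v \<and> \<not> hrow v" "\<forall>v\<in>#U. \<not> hcol v \<and> \<not> hrow v" by blast
  then show ?thesis
  proof cases
    case (A u)
    have "good TYPE('k) U u" by (rule oneside[OF E U A(1)]) (use A(2) in blast)
    then obtain U1 where "rel TYPE('k) U U1" "Ee U1 = Ee U" "set_mset U1 \<subseteq> VV" "u \<in># U1"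
      unfolding good_def by blast
    then show ?thesis using rel_refl U(2) A(1) by blast
  next
    case (B u)
    have "good TYPE('k) U' u" by (rule oneside[OF E[symmetric] U(2) U(1) B(1)]) (use B(2) in blast)
    then obtain U1 where "rel TYPE('k) U' U1" "Ee U1 = Ee U'" "set_mset U1 \<subseteq> VV" "u \<in># U1"
      unfolding good_def by blast
    then show ?thesis using rel_refl U(1) B(1) by blast
  next
    case C
    obtain u where u: "u \<in># U'" "\<forall>v\<in>#U'. Ax (fst u) \<le> Ax (fst v)"
      "\<forall>v\<in>#U'. Ax (fst v) = Ax (fst u) \<longrightarrow> snd u \<le> snd v"
      using select[OF ne U(2)] by blast
    have cu: "\<not> hcol u" "\<not> hrow u" using C(1) u(1) by auto
    have "\<exists>z\<in>#U. colfree (fst z) (fst u) \<and> rowfree (snd z) (snd u)"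
      by (rule zexists[OF E U u C(2) cu])
    then have "good TYPE('k) U u" using oneside[OF E U u(1)] by blast
    then obtain U1 where "rel TYPE('k) U U1" "Ee U1 = Ee U" "set_mset U1 \<subseteq> VV" "u \<in># U1"
      unfolding good_def by blast
    then show ?thesis using rel_refl U(2) u(1) by blast
  qed
qed

lemma main:
  "size U = k \<Longrightarrow> set_mset U \<subseteq> VV \<Longrightarrow> set_mset U' \<subseteq> VV \<Longrightarrow> Ee U = Ee U' \<Longrightarrow> rel TYPE('k::comm_ring_1) U U'"
proof (induction k arbitrary: U U')
  case 0
  then have "U = {#}" by simp
  moreover have "U' = {#}" using Ee_size[OF "0.prems"(4)] "0.prems"(1) by simp
  ultimately show ?case using rel_refl by simp
next
  case (Suc k)
  have ne: "U' \<noteq> {#}" using Ee_size[OF Suc.prems(4)] Suc.prems(1) by auto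
  obtain u U1 U1' where K: "rel TYPE('k) U U1" "rel TYPE('k) U' U1'" "Ee U1 = Ee U" "Ee U1' = Ee U'"
     "set_mset U1 \<subseteq> VV" "set_mset U1' \<subseteq> VV" "u \<in># U1" "u \<in># U1'"
    using key[OF Suc.prems(4) Suc.prems(2) Suc.prems(3) ne, where 'k='k] by blast
  define R where "R = U1 - {#u#}"
  define R' where "R' = U1' - {#u#}"
  have U1: "U1 = add_mset u R" unfolding R_def using K(7) by simp
  have U1': "U1' = add_mset u R'" unfolding R'_def using K(8) by simp
  have "img u + Ee R = img u + Ee R'" using K(3,4) Suc.prems(4) U1 U1' by simp
  then have ER: "Ee R = Ee R'" by simp
  have "size U1 = Suc k" using Ee_size[OF K(3)] Suc.prems(1) by simp
  then have sR: "size R = k" using U1 by simp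
  have RV: "set_mset R \<subseteq> VV" "set_mset R' \<subseteq> VV" using K(5,6) U1 U1' by auto
  have "rel TYPE('k) R R'" by (rule Suc.IH[OF sR RV ER])
  then have "rel TYPE('k) (R + {#u#}) (R' + {#u#})" by (rule rel_add) (use K(5) K(7) in auto)
  then have "rel TYPE('k) U1 U1'" using U1 U1' by simp
  then show ?case using K(1,2) rel_trans rel_sym by metis
qed

lemma main2:
  "set_mset U \<subseteq> VV \<Longrightarrow> set_mset U' \<subseteq> VV \<Longrightarrow> Ee U = Ee U' \<Longrightarrow> rel TYPE('k::comm_ring_1) U U'"
  using main by blast

end


context gp
begin

lemma mon_pair: "(mon {#p, q#} :: (pt,'k::comm_ring_1) mpoly) = Var p * Var q"
  unfolding mon_def Var_def by (simp add: mult_single expo_add_mset expo_single)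

lemma GG_sub: "(GG :: (pt,'k::comm_ring_1) mpoly set) \<subseteq> poly_ring VV"
proof
  fix g :: "(pt,'k) mpoly" assume "g \<in> GG"
  then obtain p q where g: "g = Var p * Var q - Var (fst p, snd q) * Var (fst q, snd p)" "inner_interval PP p q"
    unfolding GG_def by blast
  note V = inner_verts[OF g(2)]
  show "g \<in> poly_ring VV" unfolding g(1)
    by (intro poly_ring_diff poly_ring_mult poly_ring_Var V)
qed

lemma kill:
  assumes "Ee M1 = Ee M2"
  shows "subst_hom (phi_var PP r s a) (c * (mon M1 - mon M2) :: (pt,'k::comm_ring_1) mpoly) = 0"
proof -
  let ?f = "phi_var PP r s a :: pt \<Rightarrow> (tvar,'k) mpoly"
  have t: "subst_hom ?f (Poly_Mapping.single x (Poly_Mapping.lookup c x) * mon M1) =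
           subst_hom ?f (Poly_Mapping.single x (Poly_Mapping.lookup c x) * mon M2)" for x
  proof -
    have "subst_hom ?f (Poly_Mapping.single x (Poly_Mapping.lookup c x) * mon M1) =
          Poly_Mapping.single 0 (Poly_Mapping.lookup c x) * mv ?f x * Poly_Mapping.single (Ee M1) 1"
      unfolding mon_def by (simp add: mult_single subst_hom_single mv_add mv_phi mult.assoc)
    moreover have "subst_hom ?f (Poly_Mapping.single x (Poly_Mapping.lookup c x) * mon M2) =
          Poly_Mapping.single 0 (Poly_Mapping.lookup c x) * mv ?f x * Poly_Mapping.single (Ee M2) 1"
      unfolding mon_def by (simp add: mult_single subst_hom_single mv_add mv_phi mult.assoc)
    ultimately show ?thesis using assms by simp
  qed
  have "c * (mon M1 - mon M2) = (\<Sum>x\<in>Poly_Mapping.keys c. Poly_Mapping.single x (Poly_Mapping.lookup c x) * mon M1 -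
        Poly_Mapping.single x (Poly_Mapping.lookup c x) * mon M2)"
    by (subst poly_expand[of c]) (simp add: sum_distrib_right right_diff_distrib sum_subtractf)
  then show ?thesis by (simp add: subst_hom_sum subst_hom_diff t)
qed

lemma ideal_sub_toric:
  "(polyomino_ideal PP :: (pt,'k::comm_ring_1) mpoly set) \<subseteq> toric_ideal PP r s a"
proof
  fix p :: "(pt,'k) mpoly" assume p: "p \<in> polyomino_ideal PP"
  have pr: "p \<in> poly_ring VV" using ideal_gen_subset[OF GG_sub] p unfolding IP_eq by blast
  obtain F c where F: "finite F" "F \<subseteq> GG" "p = (\<Sum>g\<in>F. c g * g)"
    using p unfolding IP_eq ideal_gen_def by blast
  have "subst_hom (phi_var PP r s a) (c g * g) = 0" if g: "g \<in> F" for g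
  proof -
    obtain A B where AB: "g = Var A * Var B - Var (fst A, snd B) * Var (fst B, snd A)" "inner_interval PP A B"
      using F(2) g unfolding GG_def by blast
    have "g = mon {#A, B#} - mon {#(fst A, snd B), (fst B, snd A)#}"
      unfolding AB(1) mon_pair ..
    moreover have e: "Ee {#A, B#} = Ee {#(fst A, snd B), (fst B, snd A)#}"
      using inner_img[OF AB(2)] by simp
    have "subst_hom (phi_var PP r s a) (c g * (mon {#A, B#} - mon {#(fst A, snd B), (fst B, snd A)#})) = 0"
      by (rule kill[OF e])
    ultimately show ?thesis by simp
  qed
  then have "subst_hom (phi_var PP r s a) p = 0"
    unfolding F(3) subst_hom_sum by simp
  then show "p \<in> toric_ideal PP r s a" unfolding toric_ideal_def using pr by simp
qed

lemma toric_sub_ideal: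
  "toric_ideal PP r s a \<subseteq> (polyomino_ideal PP :: (pt,'k::comm_ring_1) mpoly set)"
proof
  fix p :: "(pt,'k) mpoly" assume p: "p \<in> toric_ideal PP r s a"
  have pr: "p \<in> poly_ring VV" and ker: "subst_hom (phi_var PP r s a) p = 0"
    using p unfolding toric_ideal_def by auto
  let ?K = "Poly_Mapping.keys p"
  let ?c = "Poly_Mapping.lookup p"
  define Eh where "Eh x = Ee (msetof x)" for x
  define rep where "rep e = (SOME x. x \<in> ?K \<and> Eh x = e)" for e
  have rep: "rep (Eh x) \<in> ?K \<and> Eh (rep (Eh x)) = Eh x" if "x \<in> ?K" for x
    unfolding rep_def by (rule someI[of _ x]) (use that in simp)
  have kV: "set_mset (msetof x) \<subseteq> VV" if "x \<in> ?K" for x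
    using pr that unfolding poly_ring_def by simp
  have sub: "subst_hom (phi_var PP r s a) p = (\<Sum>x\<in>?K. Poly_Mapping.single (Eh x) (?c x))"
  proof -
    have "subst_hom (phi_var PP r s a) p = (\<Sum>x\<in>?K. Poly_Mapping.single 0 (?c x) * mv (phi_var PP r s a) x)"
      unfolding subst_hom_def mv_def ..
    also have "\<dots> = (\<Sum>x\<in>?K. Poly_Mapping.single (Eh x) (?c x))"
    proof (rule sum.cong[OF refl])
      fix x
      have "mv (phi_var PP r s a) x = (Poly_Mapping.single (Eh x) 1 :: (tvar,'k) mpoly)"
        using mv_phi[of "msetof x"] unfolding Eh_def by simp
      then show "Poly_Mapping.single 0 (?c x) * mv (phi_var PP r s a) x = Poly_Mapping.single (Eh x) (?c x)"
        by (simp add: mult_single)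
    qed
    finally show ?thesis .
  qed
  have fib: "(\<Sum>x\<in>?K. if Eh x = e then ?c x else 0) = 0" for e
  proof -
    have "Poly_Mapping.lookup (subst_hom (phi_var PP r s a) p) e = 0" using ker by simp
    then show ?thesis unfolding sub by (simp add: lookup_sum lookup_single when_def)
  qed
  define S1 where "S1 = (\<Sum>x\<in>?K. Poly_Mapping.single x (?c x) - Poly_Mapping.single (rep (Eh x)) (?c x))"
  define S2 where "S2 = (\<Sum>x\<in>?K. Poly_Mapping.single (rep (Eh x)) (?c x))"
  have "p = S1 + S2"
    unfolding S1_def S2_def by (subst poly_expand[of p]) (simp add: sum_subtractf)
  moreover have "S2 = 0"
  proof (rule poly_mapping_eqI)
    fix k
    have l: "Poly_Mapping.lookup S2 k = (\<Sum>x\<in>?K. if rep (Eh x) = k then ?c x else 0)"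
      unfolding S2_def by (simp add: lookup_sum lookup_single when_def eq_commute)
    show "Poly_Mapping.lookup S2 k = Poly_Mapping.lookup 0 k"
    proof (cases "\<exists>x0\<in>?K. rep (Eh x0) = k")
      case True
      then obtain x0 where x0: "x0 \<in> ?K" "rep (Eh x0) = k" by blast
      have "(\<Sum>x\<in>?K. if rep (Eh x) = k then ?c x else 0) = (\<Sum>x\<in>?K. if Eh x = Eh x0 then ?c x else 0)"
      proof (rule sum.cong[OF refl])
        fix x assume x: "x \<in> ?K"
        have "rep (Eh x) = k \<longleftrightarrow> Eh x = Eh x0"
        proof
          assume "rep (Eh x) = k"
          then have "Eh (rep (Eh x)) = Eh (rep (Eh x0))" using x0 by simp
          then show "Eh x = Eh x0" using rep[OF x] rep[OF x0(1)] by simp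
        next
          assume "Eh x = Eh x0" then show "rep (Eh x) = k" using x0 by simp
        qed
        then show "(if rep (Eh x) = k then ?c x else 0) = (if Eh x = Eh x0 then ?c x else 0)" by simp
      qed
      then show ?thesis using l fib by simp
    next
      case False
      then have "(\<Sum>x\<in>?K. if rep (Eh x) = k then ?c x else 0) = 0"
        by (intro sum.neutral) auto
      then show ?thesis using l by simp
    qed
  qed
  moreover have "S1 \<in> ideal_gen (poly_ring VV) GG"
    unfolding S1_def
  proof (rule ideal_gen_sum)
    fix x assume x: "x \<in> ?K"
    let ?y = "rep (Eh x)"
    have y: "?y \<in> ?K" "Eh ?y = Eh x" using rep[OF x] by auto
    have "rel TYPE('k) (msetof x) (msetof ?y)"
      by (rule main2[OF kV[OF x] kV[OF y(1)]]) (use y(2) in \<open>simp add: Eh_def\<close>)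
    then have inI: "(mon (msetof x) - mon (msetof ?y) :: (pt,'k) mpoly) \<in> ideal_gen (poly_ring VV) GG"
      unfolding rel_def IP_eq .
    have "Poly_Mapping.single x (?c x) - Poly_Mapping.single ?y (?c x) =
          Poly_Mapping.single 0 (?c x) * (mon (msetof x) - mon (msetof ?y) :: (pt,'k) mpoly)"
      unfolding mon_def by (simp add: mult_single right_diff_distrib)
    also have "\<dots> \<in> ideal_gen (poly_ring VV) GG"
      by (rule ideal_gen_mult[OF inI]) simp
    finally show "Poly_Mapping.single x (?c x) - Poly_Mapping.single ?y (?c x) \<in> ideal_gen (poly_ring VV) GG" .
  qed
  ultimately show "p \<in> polyomino_ideal PP" unfolding IP_eq by simp
qed

lemma ideal_eq: "(polyomino_ideal PP :: (pt,'k::comm_ring_1) mpoly set) = toric_ideal PP r s a"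
  using ideal_sub_toric toric_sub_ideal by blast

end

theorem theorem4p4:
  fixes m n r s :: nat and a b :: "nat \<Rightarrow> nat \<Rightarrow> nat \<times> nat"
  assumes "grid_data m n r s a b"
  shows "(polyomino_ideal (grid_polyomino m n r s a b) :: (pt, 'k::field) mpoly set)
           = toric_ideal (grid_polyomino m n r s a b) r s a"
proof -
  interpret gp m n r s a b by (rule gp.intro) (rule assms)
  show ?thesis by (rule ideal_eq)
qed


end
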